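(* Let $A$ be a totally ordered finite alphabet and let $w\in A^*$ be a primitive word. The following conditions are equivalent: (i) $w$ is a perfectly clustering Lyndon word; (ii) $w$ is a product of two palindromes, and $w$ has a palindromic special factorization; (iii) $w$ has a special factorization $w=a_1\pi_1a_2\pi_2\cdots\pi_{k-1}a_k$ such that $w$ is conjugate to $W=a_k\pi_{k-1}a_{k-1}\cdots a_2\pi_1a_1$.
   Context: For $w\in A^*$, $Alph(w)$ is the set of letters occurring in $w$. A special factorization of $w$ is a factorization $w=a_1\pi_1a_2\pi_2\cdots\pi_{k-1}a_k$ where $Alph(w)=\{a_1<a_2<\cdots<a_k\}$ and $\pi_1,\dots,\pi_{k-1}\in A^*$ are arbitrary words. Given such a factorization, $W:=a_k\pi_{k-1}a_{k-1}\cdots\pi_2a_2\pi_1a_1$. The special factorization is palindromic if each $\pi_i$ is a palindrome (equal to its reversal). Two words $u,v$ are conjugate if $u=xy$, $v=yx$ for some words $x,y$. Words are compared in lexicographic order (a proper prefix is smaller). A Lyndon word is a primitive word strictly smaller than all its other conjugates. For a primitive word $v$ of length $n$ with conjugates $v_1<v_2<\cdots<v_n$, its Burrows–Wheeler transform is $\mathrm{bw}(v)=l_1\cdots l_n$, where $l_i$ is the last letter of $v_i$. A primitive word $v$ is perfectly clustering if $\mathrm{bw}(v)$ is weakly decreasing, i.e. $\mathrm{bw}(v)=b_k^{|v|_{b_k}}\cdots b_1^{|v|_{b_1}}$ where $b_1<\cdots<b_k$ are the letters of the alphabet and $|v|_b$ is the number of occurrences of $b$ in $v$. *)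

theory Defs
  imports Main "HOL-Library.List_Lexorder"
begin

text \<open>Words are lists over a linearly ordered alphabet; lists are compared by the
lexicographic order of List_Lexorder (a proper prefix is smaller).\<close>

definition primitive :: "'a list \<Rightarrow> bool" where
  "primitive w \<longleftrightarrow> w \<noteq> [] \<and> \<not> (\<exists>u k. k \<ge> 2 \<and> w = concat (replicate k u))"

definition conjugate :: "'a list \<Rightarrow> 'a list \<Rightarrow> bool" where
  "conjugate u v \<longleftrightarrow> (\<exists>x y. u = x @ y \<and> v = y @ x)"

definition lyndon :: "'a::linorder list \<Rightarrow> bool" where
  "lyndon w \<longleftrightarrow> primitive w \<and> (\<forall>i. 0 < i \<and> i < length w \<longrightarrow> w < rotate i w)"

definition bw :: "'a::linorder list \<Rightarrow> 'a list" where
  "bw v = map last (sort (map (\<lambda>i. rotate i v) [0..<length v]))"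

definition perfectly_clustering :: "'a::linorder list \<Rightarrow> bool" where
  "perfectly_clustering v \<longleftrightarrow> primitive v \<and> sorted_wrt (\<ge>) (bw v)"

definition palindrome :: "'a list \<Rightarrow> bool" where
  "palindrome p \<longleftrightarrow> rev p = p"

text \<open>Special factorization w = a_1 pi_1 a_2 ... pi_(k-1) a_k, where a_1 < ... < a_k are the
letters of w and ps = [pi_1, ..., pi_(k-1)].\<close>
definition special_factorization :: "'a::linorder list \<Rightarrow> 'a list list \<Rightarrow> bool" where
  "special_factorization w ps \<longleftrightarrow>
     w \<noteq> [] \<and> length ps + 1 = card (set w) \<and>
     w = concat (map2 (\<lambda>a p. a # p) (sorted_list_of_set (set w)) (ps @ [[]]))"

text \<open>W = a_k pi_(k-1) a_(k-1) ... pi_2 a_2 pi_1 a_1.\<close>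
definition bigW :: "'a::linorder list \<Rightarrow> 'a list list \<Rightarrow> 'a list" where
  "bigW w ps = concat (map2 (\<lambda>p a. p @ [a]) ([] # rev ps) (rev (sorted_list_of_set (set w))))"

end

theory Submission
  imports Defs
begin

lemma rotate_self_not_primitive:
  assumes "primitive w" "0 < d" "d < length w" "rotate d w = w"
  shows False
proof -
  have r: "rotate d w = drop d w @ take d w" using assms(3) by (simp add: rotate_drop_take)
  have "take d w @ drop d w = drop d w @ take d w" using r assms(4) by simp
  then obtain m1 m2 zs where z: "concat (replicate m1 zs) = take d w" "concat (replicate m2 zs) = drop d w"
    using comm_append_are_replicate by blast
  have "take d w \<noteq> []" using assms(2,3) by (cases w) auto
  hence "m1 \<noteq> 0" using z by (cases m1) auto
  have "drop d w \<noteq> []" using assms(3) by simp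
  hence "m2 \<noteq> 0" using z by (cases m2) auto
  have "w = concat (replicate (m1 + m2) zs)"
    by (metis append_take_drop_id concat_append replicate_add z)
  moreover have "m1 + m2 \<ge> 2" using \<open>m1 \<noteq> 0\<close> \<open>m2 \<noteq> 0\<close> by simp
  ultimately show False using assms(1) unfolding primitive_def by blast
qed

lemma rotate_inj_primitive:
  assumes "primitive w" "i < length w" "j < length w" "rotate i w = rotate j w"
  shows "i = j"
proof (rule ccontr)
  assume ne: "i \<noteq> j"
  { fix a b assume ab: "a < b" "b < length w" "rotate a w = rotate b w"
    have "rotate (length w - a) (rotate a w) = rotate (length w) w"
      using ab(1,2) by (simp add: rotate_rotate)
    hence "rotate (length w - a) (rotate a w) = w" by simp
    moreover have "rotate (length w - a) (rotate b w) = rotate (b - a) w"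
    proof -
      have "rotate (length w - a) (rotate b w) = rotate (length w - a + b) w" by (simp add: rotate_rotate)
      also have "\<dots> = rotate ((length w - a + b) mod length w) w" by (rule rotate_conv_mod)
      also have "(length w - a + b) mod length w = b - a"
      proof -
        have e: "length w - a + b = (b - a) + length w" using ab by simp
        have "(length w - a + b) mod length w = (b - a) mod length w" by (simp only: e mod_add_self2)
        also have "\<dots> = b - a" using ab by simp
        finally show ?thesis .
      qed
      finally show ?thesis by simp
    qed
    ultimately have "rotate (b - a) w = w" using ab by simp
    moreover have "b - a < length w" "0 < b - a" using ab by auto
    ultimately have False using rotate_self_not_primitive[OF assms(1), of "b - a"] by simp }
  thus False using ne assms by (metis linorder_neqE_nat)
qed

lemma less_append_Cons:
  fixes a b :: "'a::linorder"
  assumes "a < b" shows "xs @ a # r1 < xs @ b # r2"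
  using assms by (induction xs) auto

lemma snoc_less_snoc_iff:
  fixes c :: "'a::linorder"
  assumes "length X = length Y" shows "(X @ [c] < Y @ [c]) = (X < Y)"
  using assms by (induction X Y rule: list_induct2) auto

lemma chain_lemma:
  fixes key :: "nat \<Rightarrow> 'b::linorder" and lab :: "nat \<Rightarrow> 'c::linorder"
  assumes inj: "inj_on key {..<n}" and n0: "0 < n"
    and pre: "\<And>v. 0 < v \<Longrightarrow> v < n \<Longrightarrow> \<exists>u<n. key u < key v \<and> lab v \<le> lab u \<and> Rel u v"
    and relinj: "\<And>u v1 v2. Rel u v1 \<Longrightarrow> Rel u v2 \<Longrightarrow> 0 < v1 \<Longrightarrow> v1 < n \<Longrightarrow> 0 < v2 \<Longrightarrow> v2 < n \<Longrightarrow> v1 = v2"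
  shows "\<forall>y<n. key 0 \<le> key y" and "\<forall>x<n. \<forall>y<n. key x < key y \<longrightarrow> lab y \<le> lab x"
proof -
  define Pre where "Pre v = (SOME u. u<n \<and> key u < key v \<and> lab v \<le> lab u \<and> Rel u v)" for v
  have P: "Pre v < n \<and> key (Pre v) < key v \<and> lab v \<le> lab (Pre v) \<and> Rel (Pre v) v" if "0 < v" "v < n" for v
    unfolding Pre_def using someI_ex[OF pre[OF that]] by blast
  have Pinj: "inj_on Pre {v. 0 < v \<and> v < n}"
  proof (rule inj_onI)
    fix v1 v2 assume a: "v1 \<in> {v. 0 < v \<and> v < n}" "v2 \<in> {v. 0 < v \<and> v < n}" "Pre v1 = Pre v2"
    have "Rel (Pre v1) v1" using P[of v1] a(1) by simp
    moreover have "Rel (Pre v2) v2" using P[of v2] a(2) by simp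
    hence "Rel (Pre v1) v2" using a(3) by simp
    ultimately show "v1 = v2" using relinj a by auto
  qed
  have main: "key 0 \<le> key y \<and> Pre ` {v. 0 < v \<and> v < n \<and> key v \<le> key y} = {u. u < n \<and> key u < key y}"
    if y: "y < n" for y
  proof -
    define A where "A = {v. 0 < v \<and> v < n \<and> key v \<le> key y}"
    define B where "B = {u. u < n \<and> key u < key y}"
    have sub: "Pre ` A \<subseteq> B"
    proof
      fix u assume "u \<in> Pre ` A"
      then obtain v where v: "v \<in> A" "u = Pre v" by blast
      have v': "0 < v" "v < n" "key v \<le> key y" using v(1) unfolding A_def by auto
      have "Pre v < n" "key (Pre v) < key v" using P[OF v'(1,2)] by auto
      thus "u \<in> B" unfolding B_def using v(2) v'(3) by auto
    qed
    have finB: "finite B" unfolding B_def by simp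
    have cA: "card (Pre ` A) = card A"
      by (rule card_image) (rule inj_on_subset[OF Pinj], auto simp: A_def)
    have le: "card A \<le> card B" using card_mono[OF finB sub] cA by simp
    have eq1: "{v. v < n \<and> key v \<le> key y} = insert y B"
    proof -
      have "key v = key y \<Longrightarrow> v < n \<Longrightarrow> v = y" for v using inj y by (meson inj_onD lessThan_iff)
      thus ?thesis unfolding B_def using y by (auto simp add: le_less)
    qed
    have "y \<notin> B" unfolding B_def by simp
    hence c1: "card {v. v < n \<and> key v \<le> key y} = card B + 1" using eq1 finB by simp
    have key0: "key 0 \<le> key y"
    proof (rule ccontr)
      assume "\<not> key 0 \<le> key y"
      hence "{v. v < n \<and> key v \<le> key y} = A" unfolding A_def by (auto intro: gr0I)
      thus False using c1 le by simp
    qed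
    hence "{v. v < n \<and> key v \<le> key y} = insert 0 A" unfolding A_def using n0 by auto
    moreover have finA: "finite A" unfolding A_def by (rule finite_subset[of _ "{..<n}"]) auto
    moreover have "0 \<notin> A" unfolding A_def by simp
    ultimately have "card A + 1 = card B + 1" using c1 by simp
    hence "card (Pre ` A) = card B" using cA by simp
    hence "Pre ` A = B" using card_subset_eq[OF finB sub] by simp
    thus ?thesis using key0 unfolding A_def B_def by simp
  qed
  show "\<forall>y<n. key 0 \<le> key y" using main by blast
  have C1: "key v \<le> key y" if "y < n" "0 < v" "v < n" "key (Pre v) < key y" for v y
  proof -
    have "Pre v \<in> Pre ` {v. 0 < v \<and> v < n \<and> key v \<le> key y}" using main[OF that(1)] P that by auto
    then obtain v' where v': "0 < v'" "v' < n" "key v' \<le> key y" "Pre v = Pre v'" by auto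
    hence "v = v'" using Pinj that by (auto dest: inj_onD)
    thus ?thesis using v' by simp
  qed
  have "\<forall>x<n. key x < key y \<longrightarrow> lab y \<le> lab x" if "y < n" for y
    using that
  proof (induction "card {z. z < n \<and> key z < key y}" arbitrary: y rule: less_induct)
    case less
    show ?case
    proof (intro allI impI)
      fix x assume x: "x < n" "key x < key y"
      have "y \<noteq> 0" using main x by (metis leD)
      hence y0: "0 < y" by simp
      define p where "p = Pre y"
      have p: "p < n" "key p < key y" "lab y \<le> lab p" using P[OF y0 less.prems] p_def by auto
      show "lab y \<le> lab x"
      proof (cases "x = p")
        case True thus ?thesis using p by simp
      next
        case False
        hence "key x \<noteq> key p" using inj x p by (meson inj_onD lessThan_iff)
        moreover have "\<not> key p < key x"
        proof
          assume "key p < key x"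
          hence "key y \<le> key x" using C1[OF x(1) y0 less.prems] p_def by simp
          thus False using x by simp
        qed
        ultimately have xp: "key x < key p" by simp
        have "{z. z < n \<and> key z < key p} \<subset> {z. z < n \<and> key z < key y}"
          using p by auto
        hence "card {z. z < n \<and> key z < key p} < card {z. z < n \<and> key z < key y}"
          by (rule psubset_card_mono[rotated]) simp
        hence "lab p \<le> lab x" using less.hyps p x xp by blast
        thus ?thesis using p by simp
      qed
    qed
  qed
  thus "\<forall>x<n. \<forall>y<n. key x < key y \<longrightarrow> lab y \<le> lab x" by blast
qed

definition FF :: "'a list \<Rightarrow> 'a list list \<Rightarrow> 'a list" where
  "FF bs qs = concat (map2 (\<lambda>a p. a # p) bs (qs @ [[]]))"

definition PP :: "'a list list \<Rightarrow> nat \<Rightarrow> nat" where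
  "PP qs j = sum_list (map (\<lambda>q. Suc (length q)) (take j qs))"

lemma FF_Cons: "length bs = Suc (length qs) \<Longrightarrow> FF (b # bs) (q # qs) = (b # q) @ FF bs qs"
  by (simp add: FF_def)

lemma FF_hd: "length bs = Suc (length qs) \<Longrightarrow> \<exists>R. FF bs qs = bs ! 0 # R"
  by (cases bs; cases qs) (auto simp: FF_def)

lemma length_FF: "length bs = Suc (length qs) \<Longrightarrow> length (FF bs qs) = Suc (sum_list (map (\<lambda>q. Suc (length q)) qs))"
proof (induction qs arbitrary: bs)
  case Nil thus ?case by (cases bs) (auto simp: FF_def)
next
  case (Cons q qs)
  then obtain b bs' where "bs = b # bs'" by (cases bs) auto
  thus ?case using Cons by (simp add: FF_Cons)
qed

lemma PP_Cons0: "PP (q # qs) 0 = 0" by (simp add: PP_def)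
lemma PP_ConsSuc: "PP (q # qs) (Suc j) = Suc (length q) + PP qs j" by (simp add: PP_def)

lemma FF_pos:
  assumes "length bs = Suc (length qs)" "j < length qs" "m \<le> length (qs ! j)"
  shows "FF bs qs ! (PP qs j + m) = (bs ! j # qs ! j) ! m \<and>
         (\<exists>R. drop (Suc (PP qs j + m)) (FF bs qs) = drop m (qs ! j) @ bs ! Suc j # R)"
  using assms
proof (induction qs arbitrary: bs j)
  case Nil thus ?case by simp
next
  case (Cons q qs)
  then obtain b bs' where bs: "bs = b # bs'" by (cases bs) auto
  have lb: "length bs' = Suc (length qs)" using Cons.prems bs by simp
  have F: "FF bs (q # qs) = (b # q) @ FF bs' qs" using bs lb by (simp add: FF_Cons)
  show ?case
  proof (cases j)
    case 0
    have m: "m \<le> length q" using Cons.prems 0 by simp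
    have "FF bs (q # qs) ! (PP (q # qs) j + m) = (b # q) ! m"
      using m F 0 by (cases m) (auto simp: PP_Cons0 nth_append)
    moreover obtain R where R: "FF bs' qs = bs' ! 0 # R" using FF_hd[OF lb] by blast
    have "drop (Suc (PP (q # qs) j + m)) (FF bs (q # qs)) = drop m q @ FF bs' qs"
      using m F 0 by (simp add: PP_Cons0)
    ultimately show ?thesis using R bs 0 by auto
  next
    case (Suc j')
    have j': "j' < length qs" "m \<le> length (qs ! j')" using Cons.prems Suc by auto
    note IH = Cons.IH[OF lb j']
    have "FF bs (q # qs) ! (PP (q # qs) j + m) = FF bs' qs ! (PP qs j' + m)"
      using F Suc by (simp add: PP_ConsSuc nth_append)
    moreover have "drop (Suc (PP (q # qs) j + m)) (FF bs (q # qs)) = drop (Suc (PP qs j' + m)) (FF bs' qs)"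
      using F Suc by (simp add: PP_ConsSuc)
    ultimately show ?thesis using IH bs Suc by simp
  qed
qed

lemma FF_pos_surj:
  assumes "length bs = Suc (length qs)" "x < length (FF bs qs) - 1"
  shows "\<exists>j m. j < length qs \<and> m \<le> length (qs ! j) \<and> x = PP qs j + m"
  using assms
proof (induction qs arbitrary: bs x)
  case Nil thus ?case by (simp add: length_FF)
next
  case (Cons q qs)
  then obtain b bs' where bs: "bs = b # bs'" by (cases bs) auto
  have lb: "length bs' = Suc (length qs)" using Cons.prems bs by simp
  have F: "FF bs (q # qs) = (b # q) @ FF bs' qs" using bs lb by (simp add: FF_Cons)
  show ?case
  proof (cases "x \<le> length q")
    case True
    thus ?thesis by (rule_tac x=0 in exI, rule_tac x=x in exI) (simp add: PP_Cons0)
  next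
    case False
    define x' where "x' = x - Suc (length q)"
    have "x' < length (FF bs' qs) - 1" using Cons.prems(2) F False unfolding x'_def by simp
    then obtain j m where "j < length qs" "m \<le> length (qs ! j)" "x' = PP qs j + m"
      using Cons.IH[OF lb] by blast
    thus ?thesis using False unfolding x'_def
      by (rule_tac x="Suc j" in exI, rule_tac x=m in exI) (simp add: PP_ConsSuc)
  qed
qed

lemma FF_pos_bound:
  assumes "j < length qs" "m \<le> length (qs ! j)"
  shows "PP qs j + m < sum_list (map (\<lambda>q. Suc (length q)) qs)"
  using assms
proof (induction qs arbitrary: j)
  case Nil thus ?case by simp
next
  case (Cons q qs)
  thus ?case by (cases j) (auto simp: PP_Cons0 PP_ConsSuc)
qed

lemma FF_pos_inj:
  assumes "j < length qs" "m \<le> length (qs ! j)" "j' < length qs" "m' \<le> length (qs ! j')"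
    "PP qs j + m = PP qs j' + m'"
  shows "j = j' \<and> m = m'"
  using assms
proof (induction qs arbitrary: j j')
  case Nil thus ?case by simp
next
  case (Cons q qs)
  show ?case
  proof (cases j)
    case 0
    show ?thesis
    proof (cases j')
      case 0 thus ?thesis using Cons.prems \<open>j = 0\<close> by (simp add: PP_Cons0)
    next
      case (Suc i) thus ?thesis using Cons.prems \<open>j = 0\<close> by (simp add: PP_Cons0 PP_ConsSuc)
    qed
  next
    case (Suc i)
    show ?thesis
    proof (cases j')
      case 0 thus ?thesis using Cons.prems \<open>j = Suc i\<close> by (simp add: PP_Cons0 PP_ConsSuc)
    next
      case (Suc i')
      have "i = i' \<and> m = m'"
        using Cons.IH[of i i'] Cons.prems \<open>j = Suc i\<close> Suc by (simp add: PP_ConsSuc)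
      thus ?thesis using \<open>j = Suc i\<close> Suc by simp
    qed
  qed
qed

lemma concat_snoc_Cons:
  "length ps = length bs \<Longrightarrow>
   a # concat (map2 (\<lambda>p b. p @ [b]) ps bs) = concat (map2 (\<lambda>b p. b # p) (a # bs) (ps @ [[]]))"
proof (induction ps bs arbitrary: a rule: list_induct2)
  case Nil thus ?case by simp
next
  case (Cons p ps b bs)
  thus ?case by simp
qed

lemma rev_concat_map2:
  "length as = length qs \<Longrightarrow>
   rev (concat (map2 (\<lambda>a p. a # p) as qs)) = concat (map2 (\<lambda>p a. p @ [a]) (rev (map rev qs)) (rev as))"
proof (induction as qs rule: list_induct2)
  case Nil thus ?case by simp
next
  case (Cons a as q qs)
  thus ?case by (simp add: zip_append)
qed

lemma sf_basic:
  assumes "special_factorization w ps"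
  defines "as \<equiv> sorted_list_of_set (set w)"
  shows "w = FF as ps" "length as = Suc (length ps)" "w \<noteq> []"
  using assms by (auto simp: special_factorization_def FF_def)

lemma bigW_FF:
  assumes "special_factorization w ps"
  defines "as \<equiv> sorted_list_of_set (set w)"
  shows "bigW w ps = FF (rev as) (rev ps)"
proof -
  have la: "length as = Suc (length ps)" using sf_basic[OF assms(1)] as_def by simp
  then obtain a rest where r: "rev as = a # rest" by (cases "rev as") auto
  have lr: "length rest = length ps" using la r by (metis length_Cons length_rev Suc_inject)
  have "bigW w ps = concat (map2 (\<lambda>p a. p @ [a]) ([] # rev ps) (rev as))"
    unfolding bigW_def as_def by simp
  also have "\<dots> = a # concat (map2 (\<lambda>p a. p @ [a]) (rev ps) rest)" using r by simp
  also have "\<dots> = FF (rev as) (rev ps)" using concat_snoc_Cons[of "rev ps" rest a] lr r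
    by (simp add: FF_def)
  finally show ?thesis .
qed

lemma bigW_rev:
  assumes "special_factorization w ps" "\<forall>p\<in>set ps. palindrome p"
  shows "bigW w ps = rev w"
proof -
  define as where "as = sorted_list_of_set (set w)"
  have w: "w = FF as ps" and la: "length as = Suc (length ps)" using sf_basic[OF assms(1)] as_def by auto
  have mp: "map rev ps = ps" using assms(2) by (induction ps) (auto simp: palindrome_def)
  have "rev w = concat (map2 (\<lambda>p a. p @ [a]) (rev (map rev (ps @ [[]]))) (rev as))"
    using w la rev_concat_map2[of as "ps @ [[]]"] by (simp add: FF_def)
  also have "\<dots> = concat (map2 (\<lambda>p a. p @ [a]) ([] # rev ps) (rev as))" using mp by simp
  also have "\<dots> = bigW w ps" unfolding bigW_def as_def by simp
  finally show ?thesis by simp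
qed

lemma ii_imp_iii_aux:
  assumes "w = x @ y" "palindrome x" "palindrome y" "special_factorization w ps" "\<forall>p\<in>set ps. palindrome p"
  shows "conjugate w (bigW w ps)"
proof -
  have "bigW w ps = rev w" using bigW_rev assms(4,5) by blast
  also have "\<dots> = y @ x" using assms(1-3) by (simp add: palindrome_def)
  finally show ?thesis using assms(1) unfolding conjugate_def by blast
qed

lemma mod_add_cancel_lt:
  fixes a b r n :: nat
  assumes "a < n" "b < n" "(a + r) mod n = (b + r) mod n"
  shows "a = b"
proof (rule ccontr)
  assume ne: "a \<noteq> b"
  { fix a b :: nat assume ab: "a < b" "b < n" "(a + r) mod n = (b + r) mod n"
    have "n dvd (b + r) - (a + r)" using ab mod_eq_dvd_iff_nat[of "a + r" "b + r" n] by simp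
    hence "n dvd b - a" by simp
    moreover have "0 < b - a" "b - a < n" using ab by auto
    ultimately have False using nat_dvd_not_less by blast }
  thus False using ne assms by (metis linorder_neqE_nat)
qed

lemma last_rotate_Suc:
  assumes "Suc y < length W"
  shows "last (rotate (Suc y) W) = W ! y"
proof -
  have "rotate (Suc y) W = drop (Suc y) W @ take (Suc y) W" using assms by (simp add: rotate_drop_take)
  moreover have "take (Suc y) W = take y W @ [W ! y]" using assms by (simp add: take_Suc_conv_app_nth)
  ultimately show ?thesis by simp
qed

lemma rotate_Suc_split:
  assumes "Suc y < length W"
  shows "rotate (Suc y) W = drop (Suc y) W @ take (Suc y) W"
  using assms by (simp add: rotate_drop_take)

lemma sorted_bw_from:
  fixes w :: "'a::linorder list"
  assumes "\<forall>x<length w. \<forall>y<length w. rotate x w < rotate y w \<longrightarrow> last (rotate y w) \<le> last (rotate x w)"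
  shows "sorted_wrt (\<ge>) (bw w)"
proof -
  let ?L = "sort (map (\<lambda>i. rotate i w) [0..<length w])"
  have s: "sorted_wrt (\<le>) ?L" using sorted_sort[of "map (\<lambda>i. rotate i w) [0..<length w]"] by simp
  have "sorted_wrt (\<lambda>a b. last b \<le> last a) ?L"
  proof (rule sorted_wrt_mono_rel[OF _ s])
    fix a b assume ab: "a \<in> set ?L" "b \<in> set ?L" "a \<le> b"
    then obtain x y where xy: "x < length w" "y < length w" "a = rotate x w" "b = rotate y w" by auto
    show "last b \<le> last a"
    proof (cases "a = b")
      case True thus ?thesis by simp
    next
      case False thus ?thesis using ab(3) assms xy by auto
    qed
  qed
  thus ?thesis unfolding bw_def by (simp add: sorted_wrt_map)
qed

lemma strict_sorted_as: "i < j \<Longrightarrow> j < length (sorted_list_of_set A) \<Longrightarrow>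
   sorted_list_of_set A ! i < sorted_list_of_set A ! j"
  using sorted_list_of_set.strict_sorted_key_list_of_set[of A]
  by (simp add: sorted_wrt_iff_nth_less)

theorem iii_imp_i:
  fixes w :: "'a::linorder list"
  assumes prim: "primitive w" and sf: "special_factorization w ps" and cj: "conjugate w (bigW w ps)"
  shows "perfectly_clustering w \<and> lyndon w"
proof -
  define as where "as = sorted_list_of_set (set w)"
  define n where "n = length w"
  define W where "W = bigW w ps"
  have w: "w = FF as ps" and la: "length as = Suc (length ps)" and wne: "w \<noteq> []"
    using sf_basic[OF sf] as_def by auto
  have WF: "W = FF (rev as) (rev ps)" using bigW_FF[OF sf] W_def as_def by simp
  obtain x y where xy: "w = x @ y" "W = y @ x" using cj W_def unfolding conjugate_def by blast
  define r where "r = length x"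
  have Wr: "W = rotate r w" using xy r_def by (simp add: rotate_append)
  have n0: "0 < n" using wne n_def by simp
  have lW: "length W = n" using Wr n_def by simp
  define key where "key t = rotate t w" for t
  define lab where "lab t = last (rotate t w)" for t
  define S where "S = sum_list (map (\<lambda>q. Suc (length q)) ps)"
  have lw: "n = Suc S" using length_FF[OF la] w n_def S_def by simp
  have Srev: "sum_list (map (\<lambda>q. Suc (length q)) (rev ps)) = S" unfolding S_def
    by (simp add: rev_map[symmetric])
  have lar: "length (rev as) = Suc (length (rev ps))" using la by simp
  have inj: "inj_on key {..<n}"
    using rotate_inj_primitive[OF prim] unfolding key_def n_def by (intro inj_onI) auto
  define Rel where "Rel u v = (\<exists>j m. j < length ps \<and> m \<le> length (ps ! j) \<and> v = Suc (PP ps j + m) \<and>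
      u = (Suc (PP (rev ps) (length ps - 1 - j) + m) + r) mod n)" for u v
  have pre: "\<exists>u<n. key u < key v \<and> lab v \<le> lab u \<and> Rel u v" if v: "0 < v" "v < n" for v
  proof -
    have "v - 1 < length (FF as ps) - 1" using v w n_def by simp
    then obtain j m where jm: "j < length ps" "m \<le> length (ps ! j)" "v - 1 = PP ps j + m"
      using FF_pos_surj[OF la] by blast
    define j' where "j' = length ps - 1 - j"
    have j': "j' < length (rev ps)" "(rev ps) ! j' = ps ! j" using jm(1) unfolding j'_def
      by (auto simp: rev_nth)
    have m': "m \<le> length ((rev ps) ! j')" using j' jm by simp
    define y where "y = PP (rev ps) j' + m"
    have yb: "Suc y < n" using FF_pos_bound[OF j'(1) m'] Srev lw y_def by simp
    define u where "u = (Suc y + r) mod n"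
    have un: "u < n" using n0 u_def by simp
    have ku: "key u = rotate (Suc y) W"
    proof -
      have "key u = rotate (Suc y + r) w"
        unfolding key_def u_def n_def by (rule rotate_conv_mod[symmetric])
      also have "\<dots> = rotate (Suc y) (rotate r w)" by (rule rotate_rotate[symmetric])
      finally show ?thesis using Wr by simp
    qed
    have vx: "v = Suc (PP ps j + m)" using jm v by simp
    have ra: "rev as ! j' = as ! Suc j" "rev as ! Suc j' = as ! j"
      using jm(1) la unfolding j'_def by (auto simp: rev_nth)
    obtain R1 where R1: "drop (Suc (PP ps j + m)) w = drop m (ps ! j) @ as ! Suc j # R1"
      and wx: "w ! (PP ps j + m) = (as ! j # ps ! j) ! m"
      using FF_pos[OF la jm(1) jm(2)] w by auto
    obtain R2 where R2: "drop (Suc y) W = drop m (ps ! j) @ as ! j # R2"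
      and Wy: "W ! y = (as ! Suc j # ps ! j) ! m"
      using FF_pos[OF lar j'(1) m'] WF y_def ra j' by auto
    have lt: "as ! j < as ! Suc j" using strict_sorted_as[of j "Suc j" "set w"] jm(1) la as_def by simp
    have kv: "key v = drop m (ps ! j) @ as ! Suc j # (R1 @ take v w)"
      using rotate_Suc_split[of "PP ps j + m" w] vx v R1 n_def unfolding key_def by simp
    have ku2: "key u = drop m (ps ! j) @ as ! j # (R2 @ take (Suc y) W)"
      using rotate_Suc_split[OF yb[folded lW]] R2 ku by simp
    have "key u < key v" using kv ku2 less_append_Cons[OF lt] by simp
    moreover have "lab u = W ! y"
    proof -
      have "lab u = last (key u)" by (simp add: lab_def key_def)
      also have "\<dots> = last (rotate (Suc y) W)" using ku by (simp only:)
      also have "\<dots> = W ! y" by (rule last_rotate_Suc) (simp add: yb lW)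
      finally show ?thesis .
    qed
    moreover have "lab v = w ! (PP ps j + m)" unfolding lab_def using vx v n_def last_rotate_Suc by simp
    moreover have "(as ! j # ps ! j) ! m \<le> (as ! Suc j # ps ! j) ! m" using lt by (cases m) auto
    moreover have "Rel u v" unfolding Rel_def u_def y_def j'_def using jm vx by blast
    ultimately show ?thesis using un wx Wy by auto
  qed
  have relinj: "v1 = v2" if RR1: "Rel u v1" and RR2: "Rel u v2" for u v1 v2
  proof -
    obtain j1 m1 where a: "j1 < length ps" "m1 \<le> length (ps ! j1)" "v1 = Suc (PP ps j1 + m1)"
      "u = (Suc (PP (rev ps) (length ps - 1 - j1) + m1) + r) mod n" using RR1 unfolding Rel_def by blast
    obtain j2 m2 where b: "j2 < length ps" "m2 \<le> length (ps ! j2)" "v2 = Suc (PP ps j2 + m2)"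
      "u = (Suc (PP (rev ps) (length ps - 1 - j2) + m2) + r) mod n" using RR2 unfolding Rel_def by blast
    have r1: "length ps - 1 - j1 < length (rev ps)" "m1 \<le> length (rev ps ! (length ps - 1 - j1))"
      using a by (auto simp: rev_nth)
    have r2: "length ps - 1 - j2 < length (rev ps)" "m2 \<le> length (rev ps ! (length ps - 1 - j2))"
      using b by (auto simp: rev_nth)
    have "Suc (PP (rev ps) (length ps - 1 - j1) + m1) < n" using FF_pos_bound[OF r1] Srev lw by simp
    moreover have "Suc (PP (rev ps) (length ps - 1 - j2) + m2) < n" using FF_pos_bound[OF r2] Srev lw by simp
    ultimately have "Suc (PP (rev ps) (length ps - 1 - j1) + m1) = Suc (PP (rev ps) (length ps - 1 - j2) + m2)"
      using mod_add_cancel_lt a(4) b(4) by metis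
    hence "length ps - 1 - j1 = length ps - 1 - j2 \<and> m1 = m2"
      using FF_pos_inj[OF r1 r2] by simp
    hence "j1 = j2" "m1 = m2" using a(1) b(1) by auto
    thus ?thesis using a b by simp
  qed
  have CL1: "\<forall>y<n. key 0 \<le> key y"
  proof (rule chain_lemma(1)[of key n lab Rel])
    show "inj_on key {..<n}" by (rule inj)
    show "0 < n" by (rule n0)
    show "\<exists>u<n. key u < key v \<and> lab v \<le> lab u \<and> Rel u v" if "0 < v" "v < n" for v using pre that by blast
    show "v1 = v2" if "Rel u v1" "Rel u v2" "0 < v1" "v1 < n" "0 < v2" "v2 < n" for u v1 v2 using relinj that by blast
  qed
  have CL2: "\<forall>x<n. \<forall>y<n. key x < key y \<longrightarrow> lab y \<le> lab x"
  proof (rule chain_lemma(2)[of key n lab Rel])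
    show "inj_on key {..<n}" by (rule inj)
    show "0 < n" by (rule n0)
    show "\<exists>u<n. key u < key v \<and> lab v \<le> lab u \<and> Rel u v" if "0 < v" "v < n" for v using pre that by blast
    show "v1 = v2" if "Rel u v1" "Rel u v2" "0 < v1" "v1 < n" "0 < v2" "v2 < n" for u v1 v2 using relinj that by blast
  qed
  have lyn: "lyndon w" unfolding lyndon_def
  proof (intro conjI prim allI impI)
    fix i assume i: "0 < i \<and> i < length w"
    have "key 0 \<le> key i" using CL1 i n_def by simp
    moreover have "key 0 \<noteq> key i" using inj i n_def by (metis inj_onD lessThan_iff n0 not_less0 less_irrefl)
    ultimately show "w < rotate i w" unfolding key_def by simp
  qed
  have "sorted_wrt (\<ge>) (bw w)"
    using sorted_bw_from[of w] CL2 unfolding key_def lab_def n_def by blast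
  thus ?thesis using lyn prim unfolding perfectly_clustering_def by simp
qed

definition rk :: "'a::linorder list \<Rightarrow> nat \<Rightarrow> nat" where
  "rk w t = card {u. u < length w \<and> rotate u w < rotate t w}"
definition lo_c :: "'a::linorder list \<Rightarrow> 'a \<Rightarrow> nat" where
  "lo_c w c = card {u. u < length w \<and> w ! u < c}"
definition hi_c :: "'a::linorder list \<Rightarrow> 'a \<Rightarrow> nat" where
  "hi_c w c = card {u. u < length w \<and> w ! u \<le> c}"
definition XX :: "'a::linorder list \<Rightarrow> nat \<Rightarrow> nat" where
  "XX w t = rk w (t mod length w)"
definition LL :: "'a list \<Rightarrow> nat \<Rightarrow> 'a" where
  "LL w t = w ! (t mod length w)"

declare rotate_Suc[simp del]

lemma hi_c_le: "hi_c w c \<le> length w"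
proof -
  have "{u. u < length w \<and> w ! u \<le> c} \<subseteq> {..<length w}" by auto
  hence "card {u. u < length w \<and> w ! u \<le> c} \<le> card {..<length w}" by (rule card_mono[rotated]) simp
  thus ?thesis unfolding hi_c_def by simp
qed

lemma lo_le_hi: "lo_c w c \<le> hi_c w c"
  unfolding lo_c_def hi_c_def by (rule card_mono) auto

lemma hi_le_lo: "c < d \<Longrightarrow> hi_c w c \<le> lo_c w d"
  unfolding lo_c_def hi_c_def by (rule card_mono) auto

lemma lo_lt_hi: "c \<in> set w \<Longrightarrow> lo_c w c < hi_c w c"
proof -
  assume "c \<in> set w"
  then obtain i where i: "i < length w" "w ! i = c" by (auto simp: in_set_conv_nth)
  have "{u. u < length w \<and> w ! u < c} \<subset> {u. u < length w \<and> w ! u \<le> c}"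
    using i by auto
  thus ?thesis unfolding lo_c_def hi_c_def by (rule psubset_card_mono[rotated]) simp
qed

context
  fixes w :: "'a::linorder list"
  assumes prim: "primitive w" and pcw: "perfectly_clustering w" and lyn: "lyndon w"
begin

lemma wne: "w \<noteq> []" using prim unfolding primitive_def by simp

lemma npos: "0 < length w" using wne by simp

lemma rot_cons: "t < length w \<Longrightarrow> rotate t w = w ! t # tl (rotate t w)"
proof -
  assume t: "t < length w"
  have "rotate t w \<noteq> []" using wne by simp
  moreover have "hd (rotate t w) = w ! t" using hd_rotate_conv_nth[OF wne, of t] t by simp
  ultimately show ?thesis by (metis list.collapse)
qed

lemma rot_suc: "t < length w \<Longrightarrow> rotate (Suc t) w = tl (rotate t w) @ [w ! t]"
proof -
  assume t: "t < length w"
  have "rotate (Suc t) w = rotate1 (rotate t w)" by (rule rotate_Suc)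
  also have "\<dots> = tl (rotate t w) @ [w ! t]" using rot_cons[OF t] by (metis rotate1.simps(2) list.sel(3))
  finally show ?thesis .
qed

lemma last_rot_suc: "t < length w \<Longrightarrow> last (rotate (Suc t) w) = w ! t"
  using rot_suc by simp

lemma rot_mod: "rotate t w = rotate (t mod length w) w"
  by (rule rotate_conv_mod)

lemma rot_inj: "inj_on (\<lambda>t. rotate t w) {..<length w}"
  using rotate_inj_primitive[OF prim] by (intro inj_onI) auto

lemma PC:
  assumes "x < length w" "y < length w" "rotate x w < rotate y w"
  shows "last (rotate y w) \<le> last (rotate x w)"
proof -
  define L where "L = sort (map (\<lambda>i. rotate i w) [0..<length w])"
  have sL: "sorted L" unfolding L_def by simp
  have sb: "sorted_wrt (\<ge>) (map last L)" using pcw unfolding perfectly_clustering_def bw_def L_def by simp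
  have "rotate x w \<in> set L" "rotate y w \<in> set L" using assms unfolding L_def by auto
  then obtain i j where ij: "i < length L" "L ! i = rotate x w" "j < length L" "L ! j = rotate y w"
    by (auto simp: in_set_conv_nth)
  have "i < j"
  proof (rule ccontr)
    assume "\<not> i < j"
    hence "j \<le> i" by simp
    hence "L ! j \<le> L ! i" using sorted_nth_mono[OF sL \<open>j \<le> i\<close> ij(1)] by simp
    thus False using assms(3) ij by simp
  qed
  hence "last (L ! j) \<le> last (L ! i)" using sorted_wrt_nth_less[OF sb, of i j] ij by simp
  thus ?thesis using ij by simp
qed

lemma rot_less_hd: "u < length w \<Longrightarrow> t < length w \<Longrightarrow> w ! u < w ! t \<Longrightarrow> rotate u w < rotate t w"
  by (subst rot_cons, assumption, subst (2) rot_cons, assumption) simp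

lemma rot_less_hd_le: "u < length w \<Longrightarrow> t < length w \<Longrightarrow> rotate u w < rotate t w \<Longrightarrow> w ! u \<le> w ! t"
proof -
  assume a: "u < length w" "t < length w" "rotate u w < rotate t w"
  have "rotate u w = w ! u # tl (rotate u w)" "rotate t w = w ! t # tl (rotate t w)"
    using rot_cons a(1,2) by blast+
  hence "w ! u # tl (rotate u w) < w ! t # tl (rotate t w)" using a(3) by simp
  thus ?thesis by (auto simp: Cons_less_Cons)
qed

lemma rot_suc_less_iff:
  assumes "u < length w" "t < length w" "w ! u = w ! t"
  shows "(rotate (Suc u) w < rotate (Suc t) w) = (rotate u w < rotate t w)"
proof -
  have l: "length (tl (rotate u w)) = length (tl (rotate t w))" by simp
  have "(rotate (Suc u) w < rotate (Suc t) w) = (tl (rotate u w) < tl (rotate t w))"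
    using rot_suc[OF assms(1)] rot_suc[OF assms(2)] assms(3) snoc_less_snoc_iff[OF l] by simp
  also have "\<dots> = (rotate u w < rotate t w)"
    using rot_cons[OF assms(1)] rot_cons[OF assms(2)] assms(3) by (metis Cons_less_Cons less_irrefl)
  finally show ?thesis .
qed

lemma rk_set_fin: "finite {u. u < length w \<and> P u}" by simp

lemma rk_lt: "t < length w \<Longrightarrow> rk w t < length w"
proof -
  assume t: "t < length w"
  have "{u. u < length w \<and> rotate u w < rotate t w} \<subset> {..<length w}" using t by auto
  thus ?thesis unfolding rk_def using psubset_card_mono[of "{..<length w}"] by simp
qed

lemma rk_mono: "t < length w \<Longrightarrow> t' < length w \<Longrightarrow> rotate t w < rotate t' w \<Longrightarrow> rk w t < rk w t'"
proof -
  assume a: "t < length w" "t' < length w" "rotate t w < rotate t' w"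
  have "{u. u < length w \<and> rotate u w < rotate t w} \<subset> {u. u < length w \<and> rotate u w < rotate t' w}"
    using a by auto
  thus ?thesis unfolding rk_def by (rule psubset_card_mono[rotated]) simp
qed

lemma rk_inj: "inj_on (rk w) {..<length w}"
proof (rule inj_onI)
  fix t t' assume a: "t \<in> {..<length w}" "t' \<in> {..<length w}" "rk w t = rk w t'"
  show "t = t'"
  proof (rule ccontr)
    assume "t \<noteq> t'"
    hence "rotate t w \<noteq> rotate t' w" using inj_onD[OF rot_inj, of t t'] a(1,2) by auto
    hence "rotate t w < rotate t' w \<or> rotate t' w < rotate t w" by (simp add: neq_iff)
    thus False using rk_mono[of t t'] rk_mono[of t' t] a by auto
  qed
qed

lemma rk_surj: "x < length w \<Longrightarrow> \<exists>t<length w. rk w t = x"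
proof -
  assume x: "x < length w"
  have "rk w ` {..<length w} \<subseteq> {..<length w}" using rk_lt by auto
  moreover have "card (rk w ` {..<length w}) = card {..<length w}" using card_image[OF rk_inj] by simp
  ultimately have "rk w ` {..<length w} = {..<length w}" by (simp add: card_subset_eq)
  hence "x \<in> rk w ` {..<length w}" using x by simp
  thus ?thesis by auto
qed

lemma rk0: "rk w 0 = 0"
proof -
  have "{u. u < length w \<and> rotate u w < rotate 0 w} = {}"
  proof -
    { fix u assume u: "u < length w" "rotate u w < w"
      have False
      proof (cases "u = 0")
        case True thus False using u by simp
      next
        case False
        hence "w < rotate u w" using lyn u(1) unfolding lyndon_def by simp
        thus False using u(2) by simp
      qed }
    thus ?thesis by auto
  qed
  thus ?thesis unfolding rk_def by simp
qed

lemma rk_bounds: "t < length w \<Longrightarrow> lo_c w (w ! t) \<le> rk w t \<and> rk w t < hi_c w (w ! t)"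
proof -
  assume t: "t < length w"
  have "{u. u < length w \<and> w ! u < w ! t} \<subseteq> {u. u < length w \<and> rotate u w < rotate t w}"
    using rot_less_hd t by auto
  hence a: "lo_c w (w ! t) \<le> rk w t" unfolding lo_c_def rk_def by (rule card_mono[rotated]) simp
  have "{u. u < length w \<and> rotate u w < rotate t w} \<subset> {u. u < length w \<and> w ! u \<le> w ! t}"
    using rot_less_hd_le t by auto
  hence "rk w t < hi_c w (w ! t)" unfolding hi_c_def rk_def by (rule psubset_card_mono[rotated]) simp
  thus ?thesis using a by simp
qed

lemma rk_step:
  assumes t: "t < length w"
  shows "rk w (Suc t mod length w) + lo_c w (w ! t) + hi_c w (w ! t) = rk w t + length w"
proof -
  define n where "n = length w"
  define c where "c = w ! t"
  define \<sigma> where "\<sigma> v = Suc v mod n" for v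
  have n0: "0 < n" using npos n_def by simp
  have \<sigma>inj: "inj_on \<sigma> {..<n}"
  proof (rule inj_onI)
    fix a b assume "a \<in> {..<n}" "b \<in> {..<n}" "\<sigma> a = \<sigma> b"
    thus "a = b" unfolding \<sigma>_def using mod_add_cancel_lt[of a n b 1] by simp
  qed
  have \<sigma>surj: "\<exists>v<n. \<sigma> v = u" if "u < n" for u
  proof (cases u)
    case 0 thus ?thesis using n0 by (rule_tac x="n - 1" in exI) (auto simp: \<sigma>_def)
  next
    case (Suc v) thus ?thesis using that by (rule_tac x=v in exI) (auto simp: \<sigma>_def)
  qed
  have rs: "rotate (\<sigma> v) w = rotate (Suc v) w" for v unfolding \<sigma>_def n_def by (rule rot_mod[symmetric])
  define A where "A = {u. u < n \<and> rotate u w < rotate (Suc t) w}"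
  define B1 where "B1 = {v. v < n \<and> c < w ! v}"
  define B2 where "B2 = {v. v < n \<and> w ! v = c \<and> rotate v w < rotate t w}"
  have lastt: "last (rotate (Suc t) w) = c" using last_rot_suc[OF t] c_def by simp
  have A_eq: "A = \<sigma> ` B1 \<union> \<sigma> ` B2"
  proof
    show "A \<subseteq> \<sigma> ` B1 \<union> \<sigma> ` B2"
    proof
      fix u assume u: "u \<in> A"
      hence un: "u < n" unfolding A_def by simp
      obtain v where v: "v < n" "\<sigma> v = u" using \<sigma>surj[OF un] by blast
      have "last (rotate u w) = last (rotate (Suc v) w)" using v(2) rs[of v] by simp
      hence lu: "last (rotate u w) = w ! v" using last_rot_suc[of v] v(1) n_def by simp
      have st: "\<sigma> t < n" unfolding \<sigma>_def using n0 by simp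
      have "rotate u w < rotate (Suc t) w" using u unfolding A_def by simp
      hence "rotate u w < rotate (\<sigma> t) w" using rs[of t] by simp
      hence "last (rotate (\<sigma> t) w) \<le> last (rotate u w)"
        using PC[of u "\<sigma> t"] un st n_def by simp
      hence cv: "c \<le> w ! v" using lu rs[of t] lastt by simp
      show "u \<in> \<sigma> ` B1 \<union> \<sigma> ` B2"
      proof (cases "c < w ! v")
        case True thus ?thesis using v unfolding B1_def by auto
      next
        case False
        hence eq: "w ! v = c" using cv by simp
        have "rotate u w < rotate (Suc t) w" using u unfolding A_def by simp
        hence "rotate (Suc v) w < rotate (Suc t) w" using rs[of v] v(2) by simp
        hence "rotate v w < rotate t w" using rot_suc_less_iff[of v t] v(1) t eq c_def n_def by simp
        thus ?thesis using v eq unfolding B2_def by auto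
      qed
    qed
  next
    show "\<sigma> ` B1 \<union> \<sigma> ` B2 \<subseteq> A"
    proof
      fix u assume "u \<in> \<sigma> ` B1 \<union> \<sigma> ` B2"
      then obtain v where v: "v < n" "u = \<sigma> v" "c < w ! v \<or> (w ! v = c \<and> rotate v w < rotate t w)"
        unfolding B1_def B2_def by auto
      have un: "u < n" using v n0 unfolding \<sigma>_def by simp
      have "last (rotate u w) = last (rotate (Suc v) w)" using v(2) rs[of v] by simp
      hence lu: "last (rotate u w) = w ! v" using last_rot_suc[of v] v(1) n_def by simp
      have st: "\<sigma> t < n" unfolding \<sigma>_def using n0 by simp
      have lt': "last (rotate (\<sigma> t) w) = c" using lastt rs[of t] by simp
      have "rotate u w < rotate (\<sigma> t) w"
      proof (cases "c < w ! v")
        case True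
        have "rotate u w \<noteq> rotate (\<sigma> t) w" using lu lt' True by auto
        moreover have "\<not> rotate (\<sigma> t) w < rotate u w"
        proof
          assume "rotate (\<sigma> t) w < rotate u w"
          hence "last (rotate u w) \<le> last (rotate (\<sigma> t) w)" using PC[of "\<sigma> t" u] un st n_def by simp
          thus False using lu lt' True by simp
        qed
        ultimately show ?thesis by simp
      next
        case False
        hence "w ! v = c" "rotate v w < rotate t w" using v by auto
        hence "rotate (Suc v) w < rotate (Suc t) w" using rot_suc_less_iff[of v t] v(1) t c_def n_def by simp
        thus ?thesis using rs[of v] rs[of t] v(2) by simp
      qed
      thus "u \<in> A" using un rs[of t] unfolding A_def by simp
    qed
  qed
  have disj: "\<sigma> ` B1 \<inter> \<sigma> ` B2 = {}"
  proof -
    have e: "B1 \<inter> B2 = {}" unfolding B1_def B2_def by auto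
    have s1: "B1 \<subseteq> {..<n}" "B2 \<subseteq> {..<n}" unfolding B1_def B2_def by auto
    have "\<sigma> ` (B1 \<inter> B2) = \<sigma> ` B1 \<inter> \<sigma> ` B2" by (rule inj_on_image_Int[OF \<sigma>inj s1])
    thus ?thesis using e by simp
  qed
  have finB: "finite B1" "finite B2" unfolding B1_def B2_def by auto
  have cB1: "card (\<sigma> ` B1) = card B1" by (rule card_image, rule inj_on_subset[OF \<sigma>inj]) (auto simp: B1_def)
  have cB2: "card (\<sigma> ` B2) = card B2" by (rule card_image, rule inj_on_subset[OF \<sigma>inj]) (auto simp: B2_def)
  have cA: "card A = card B1 + card B2"
    using A_eq disj card_Un_disjoint[of "\<sigma> ` B1" "\<sigma> ` B2"] finB cB1 cB2 by simp
  have h1: "card B1 + hi_c w c = n"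
  proof -
    have "{..<n} = B1 \<union> {u. u < n \<and> w ! u \<le> c}" unfolding B1_def by auto
    moreover have "B1 \<inter> {u. u < n \<and> w ! u \<le> c} = {}" unfolding B1_def by auto
    moreover have "card (B1 \<union> {u. u < n \<and> w ! u \<le> c}) = card B1 + card {u. u < n \<and> w ! u \<le> c}"
      by (rule card_Un_disjoint) (use finB \<open>B1 \<inter> {u. u < n \<and> w ! u \<le> c} = {}\<close> in auto)
    ultimately have "card {..<n} = card B1 + card {u. u < n \<and> w ! u \<le> c}" by simp
    thus ?thesis unfolding hi_c_def n_def by simp
  qed
  have h2: "rk w t = lo_c w c + card B2"
  proof -
    have "{u. u < n \<and> rotate u w < rotate t w} = {u. u < n \<and> w ! u < c} \<union> B2"
    proof (intro set_eqI iffI)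
      fix u assume "u \<in> {u. u < n \<and> rotate u w < rotate t w}"
      hence u: "u < n" "rotate u w < rotate t w" by auto
      hence le: "w ! u \<le> c" using rot_less_hd_le t c_def n_def by simp
      show "u \<in> {u. u < n \<and> w ! u < c} \<union> B2"
      proof (cases "w ! u = c")
        case True thus ?thesis using u unfolding B2_def by simp
      next
        case False
        hence "w ! u < c" using le by simp
        thus ?thesis using u by simp
      qed
    next
      fix u assume u: "u \<in> {u. u < n \<and> w ! u < c} \<union> B2"
      show "u \<in> {u. u < n \<and> rotate u w < rotate t w}"
      proof (cases "u \<in> B2")
        case True thus ?thesis unfolding B2_def by simp
      next
        case False
        hence "u < n" "w ! u < c" using u by auto
        thus ?thesis using rot_less_hd t c_def n_def by simp
      qed
    qed
    moreover have "{u. u < n \<and> w ! u < c} \<inter> B2 = {}" unfolding B2_def by auto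
    ultimately show ?thesis
      using card_Un_disjoint[of "{u. u < n \<and> w ! u < c}" B2] finB unfolding rk_def lo_c_def n_def by simp
  qed
  have rr: "rotate (Suc t mod length w) w = rotate (Suc t) w" by (rule rot_mod[symmetric])
  have "rk w (Suc t mod n) = card A"
    unfolding rk_def A_def n_def rr by (rule refl)
  hence "rk w (Suc t mod n) + lo_c w c + hi_c w c = rk w t + n" using cA h1 h2 by linarith
  thus ?thesis by (simp only: n_def c_def)
qed

lemma XX_step: "XX w (Suc t) + lo_c w (LL w t) + hi_c w (LL w t) = XX w t + length w"
proof -
  have "Suc t mod length w = Suc (t mod length w) mod length w" by (simp add: mod_Suc_eq)
  thus ?thesis using rk_step[of "t mod length w"] npos unfolding XX_def LL_def by simp
qed

lemma XX_bounds: "lo_c w (LL w t) \<le> XX w t \<and> XX w t < hi_c w (LL w t)"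
  using rk_bounds[of "t mod length w"] npos unfolding XX_def LL_def by simp

lemma XX_lt: "XX w t < length w"
  using rk_lt[of "t mod length w"] npos unfolding XX_def by simp

lemma XX_mod: "XX w t = XX w (t mod length w)" unfolding XX_def by simp
lemma LL_mod: "LL w t = LL w (t mod length w)" unfolding LL_def by simp

lemma XX_inj: "XX w a = XX w b \<Longrightarrow> a mod length w = b mod length w"
  using inj_onD[OF rk_inj, of "a mod length w" "b mod length w"] npos unfolding XX_def by simp

lemma XX_surj: "x < length w \<Longrightarrow> \<exists>t<length w. XX w t = x"
proof -
  assume x: "x < length w"
  obtain t where "t < length w" "rk w t = x" using rk_surj[OF x] by blast
  thus ?thesis unfolding XX_def by (intro exI[of _ t]) simp
qed

lemma XX0: "XX w 0 = 0" using rk0 npos unfolding XX_def by simp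

lemma LL_in: "LL w t \<in> set w" using npos unfolding LL_def by simp

lemma LL_nth: "t < length w \<Longrightarrow> LL w t = w ! t" unfolding LL_def by simp

end

definition mk :: "'a::linorder list \<Rightarrow> nat \<Rightarrow> bool" where
  "mk w t = (XX w t = lo_c w (LL w t))"
definition tau :: "'a::linorder list \<Rightarrow> nat \<Rightarrow> nat" where
  "tau w i = (SOME t. t < length w \<and> XX w t = lo_c w (sorted_list_of_set (set w) ! i))"

context
  fixes w :: "'a::linorder list"
  assumes prim: "primitive w" and pcw: "perfectly_clustering w" and lyn: "lyndon w"
begin

abbreviation "n \<equiv> length w"
abbreviation "X \<equiv> XX w"
abbreviation "L \<equiv> LL w"
abbreviation "lo \<equiv> lo_c w"
abbreviation "hi \<equiv> hi_c w"
abbreviation "as \<equiv> sorted_list_of_set (set w)"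
abbreviation "k \<equiv> length (sorted_list_of_set (set w))"

lemmas bas = wne[OF prim pcw lyn] npos[OF prim pcw lyn] XX_step[OF prim pcw lyn] XX_bounds[OF prim pcw lyn]
  XX_lt[OF prim pcw lyn] XX_mod[OF prim pcw lyn] LL_mod[OF prim pcw lyn] XX_inj[OF prim pcw lyn]
  XX_surj[OF prim pcw lyn] XX0[OF prim pcw lyn] LL_in[OF prim pcw lyn] LL_nth[OF prim pcw lyn]

lemma n0: "0 < n" using bas(2) .
lemma stp: "X (Suc t) + lo (L t) + hi (L t) = X t + n" using bas(3) .
lemma bnd: "lo (L t) \<le> X t" "X t < hi (L t)" using bas(4) by auto
lemma Xlt: "X t < n" using bas(5) .
lemma Xmod: "X t = X (t mod n)" using bas(6) .
lemma Lmod: "L t = L (t mod n)" using bas(7) .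
lemma Xinj: "X a = X b \<Longrightarrow> a mod n = b mod n" using bas(8) .
lemma Xsurj: "x < n \<Longrightarrow> \<exists>t<n. X t = x" using bas(9) .
lemma X0: "X 0 = 0" using bas(10) .
lemma Lin: "L t \<in> set w" using bas(11) .
lemma Xn: "X (t + n) = X t" using Xmod[of "t + n"] Xmod[of t] by simp
lemma Ln: "L (t + n) = L t" using Lmod[of "t + n"] Lmod[of t] by simp

lemma Xinj_lt: assumes "X a = X b" "a < n" "b < n" shows "a = b"
  using Xinj[OF assms(1)] assms(2,3) by simp

lemma same_int: "c \<in> set w \<Longrightarrow> lo c \<le> X b \<Longrightarrow> X b < hi c \<Longrightarrow> L b = c"
proof -
  assume c: "c \<in> set w" and b: "lo c \<le> X b" "X b < hi c"
  show "L b = c"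
  proof (rule ccontr)
    assume ne: "L b \<noteq> c"
    show False
    proof (cases "L b < c")
      case True
      hence "hi (L b) \<le> lo c" by (rule hi_le_lo)
      thus False using b bnd[of b] by simp
    next
      case False
      hence "c < L b" using ne by simp
      hence "hi c \<le> lo (L b)" by (rule hi_le_lo)
      thus False using b bnd[of b] by simp
    qed
  qed
qed

lemma RR:
  assumes "X a + X (Suc b) + 1 = n"
  shows "X (Suc a) + X b + 1 = n \<and> L a = L b"
proof -
  define c where "c = L b"
  have s: "X (Suc b) + lo c + hi c = X b + n" using stp[of b] c_def by simp
  have bb: "lo c \<le> X b" "X b < hi c" using bnd[of b] c_def by auto
  have xa: "X a + 1 + X b = lo c + hi c" using s assms by linarith
  have "L a = c" using same_int[of c a] Lin[of b] c_def xa bb by simp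
  moreover have "X (Suc a) + lo c + hi c = X a + n" using stp[of a] \<open>L a = c\<close> by simp
  hence "X (Suc a) + X b + 1 = n" using xa by linarith
  ultimately show ?thesis using c_def by simp
qed

lemma suc_mod_cancel: "Suc a mod n = Suc b mod n \<Longrightarrow> a mod n = b mod n"
proof -
  assume h: "Suc a mod n = Suc b mod n"
  have "(a mod n + 1) mod n = (b mod n + 1) mod n" using h by (simp add: mod_Suc_eq)
  thus ?thesis using mod_add_cancel_lt[of "a mod n" n "b mod n" 1] n0 by simp
qed

lemma QQ:
  assumes "X (Suc a) + X t + 1 = lo (L t) + hi (L t)"
  shows "X a + X (Suc t) + 1 = lo (L (Suc t)) + hi (L (Suc t))"
proof -
  define c where "c = L t"
  define d where "d = L (Suc t)"
  have bd: "lo d \<le> X (Suc t)" "X (Suc t) < hi d" using bnd[of "Suc t"] d_def by auto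
  define p where "p = lo d + hi d - 1 - X (Suc t)"
  have pn: "p < n" using bd hi_c_le[of w d] unfolding p_def by linarith
  obtain a'' where a'': "a'' < n" "X a'' = p" using Xsurj[OF pn] by blast
  have "lo d \<le> X a''" "X a'' < hi d" using a''(2) bd unfolding p_def by linarith+
  hence "L a'' = d" using same_int[of d a''] Lin[of "Suc t"] d_def by simp
  hence s1: "X (Suc a'') + lo d + hi d = X a'' + n" using stp[of a''] by simp
  have s2: "X (Suc t) + lo c + hi c = X t + n" using stp[of t] c_def by simp
  have bc: "lo c \<le> X t" "X t < hi c" using bnd[of t] c_def by auto
  have as': "X (Suc a) + X t + 1 = lo c + hi c" using assms c_def by simp
  have "X (Suc a'') = X (Suc a)" using s1 s2 a''(2) as' bd bc unfolding p_def by linarith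
  hence "Suc a'' mod n = Suc a mod n" by (rule Xinj)
  hence "a'' mod n = a mod n" by (rule suc_mod_cancel)
  hence "X a = p" using Xmod[of a] Xmod[of a''] a'' by simp
  thus ?thesis unfolding p_def d_def[symmetric] using bd by linarith
qed

lemma QQ_L: "X a + X t + 1 = lo (L t) + hi (L t) \<Longrightarrow> L a = L t"
proof -
  assume h: "X a + X t + 1 = lo (L t) + hi (L t)"
  have "lo (L t) \<le> X t" "X t < hi (L t)" using bnd by auto
  hence "lo (L t) \<le> X a" "X a < hi (L t)" using h by linarith+
  thus ?thesis using same_int[of "L t" a] Lin[of t] by simp
qed

lemma as_set: "set as = set w" by simp
lemma k_pos: "0 < k" using bas(1) by (simp add: card_gt_0_iff)
lemma as_lt: "i < j \<Longrightarrow> j < k \<Longrightarrow> as ! i < as ! j" by (rule strict_sorted_as)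
lemma as_in: "i < k \<Longrightarrow> as ! i \<in> set w"
  using nth_mem[of i as] by simp
lemma in_as: "c \<in> set w \<Longrightarrow> \<exists>i<k. as ! i = c"
  using in_set_conv_nth[of c as] by simp

lemma lo_as0: "lo (as ! 0) = 0"
proof -
  have "{u. u < n \<and> w ! u < as ! 0} = {}"
  proof -
    { fix u assume u: "u < n" "w ! u < as ! 0"
      obtain i where "i < k" "as ! i = w ! u" using in_as[of "w ! u"] u by auto
      hence False using u as_lt[of 0 i] by (cases i) auto }
    thus ?thesis by auto
  qed
  thus ?thesis unfolding lo_c_def by simp
qed

lemma hi_last: "hi (as ! (k - 1)) = n"
proof -
  have "{u. u < n \<and> w ! u \<le> as ! (k - 1)} = {..<n}"
  proof -
    { fix u assume u: "u < n"
      obtain i where i: "i < k" "as ! i = w ! u" using in_as[of "w ! u"] u by auto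
      have "w ! u \<le> as ! (k - 1)"
      proof (cases "i = k - 1")
        case True thus ?thesis using i by simp
      next
        case False
        hence "i < k - 1" using i by linarith
        hence "as ! i < as ! (k - 1)" using as_lt[of i "k - 1"] k_pos by simp
        thus ?thesis using i by simp
      qed }
    thus ?thesis by auto
  qed
  thus ?thesis unfolding hi_c_def by simp
qed

lemma hi_lo_cons: "Suc i < k \<Longrightarrow> hi (as ! i) = lo (as ! Suc i)"
proof -
  assume i: "Suc i < k"
  have "{u. u < n \<and> w ! u \<le> as ! i} = {u. u < n \<and> w ! u < as ! Suc i}"
  proof -
    { fix u assume u: "u < n"
      obtain j where j: "j < k" "as ! j = w ! u" using in_as[of "w ! u"] u by auto
      have "(w ! u \<le> as ! i) = (w ! u < as ! Suc i)"
      proof (cases "j \<le> i")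
        case True
        hence "w ! u \<le> as ! i" using j as_lt[of j i] i by (cases "j = i") auto
        moreover have "w ! u < as ! Suc i" using j as_lt[of j "Suc i"] i True by simp
        ultimately show ?thesis by simp
      next
        case False
        hence "as ! Suc i \<le> w ! u" using j as_lt[of "Suc i" j] by (cases "j = Suc i") auto
        moreover have "as ! i < w ! u" using j as_lt[of i j] False by simp
        ultimately have "\<not> w ! u \<le> as ! i" "\<not> w ! u < as ! Suc i" by auto
        thus ?thesis by blast
      qed }
    thus ?thesis by auto
  qed
  thus ?thesis unfolding hi_c_def lo_c_def by simp
qed

lemma lo_as_inj: "i < k \<Longrightarrow> j < k \<Longrightarrow> lo (as ! i) = lo (as ! j) \<Longrightarrow> i = j"
proof (rule ccontr)
  assume a: "i < k" "j < k" "lo (as ! i) = lo (as ! j)" "i \<noteq> j"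
  { fix a b assume ab: "a < b" "b < k" "lo (as ! a) = lo (as ! b)"
    have "as ! a < as ! b" using as_lt ab by simp
    hence "hi (as ! a) \<le> lo (as ! b)" by (rule hi_le_lo)
    moreover have "lo (as ! a) < hi (as ! a)" using lo_lt_hi[OF as_in[of a]] ab by simp
    ultimately have False using ab by simp }
  thus False using a by (metis linorder_neqE_nat)
qed

lemma lo_zero: "c \<in> set w \<Longrightarrow> lo c = 0 \<Longrightarrow> c = as ! 0"
proof -
  assume c: "c \<in> set w" "lo c = 0"
  obtain i where i: "i < k" "as ! i = c" using in_as c by blast
  thus ?thesis using lo_as_inj[of i 0] c lo_as0 k_pos by simp
qed

lemma L0: "L 0 = as ! 0"
proof -
  have "lo (L 0) = 0" using bnd(1)[of 0] X0 by simp
  thus ?thesis using lo_zero Lin by blast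
qed

lemma hi_n: "c \<in> set w \<Longrightarrow> hi c = n \<Longrightarrow> c = as ! (k - 1)"
proof -
  assume c: "c \<in> set w" "hi c = n"
  obtain i where i: "i < k" "as ! i = c" using in_as c by blast
  show ?thesis
  proof (rule ccontr)
    assume "c \<noteq> as ! (k - 1)"
    hence "i < k - 1" using i by (cases "i = k - 1") auto
    hence "hi c \<le> lo (as ! (k - 1))" using i as_lt[of i "k - 1"] hi_le_lo by simp
    moreover have "lo (as ! (k - 1)) < hi (as ! (k - 1))" using lo_lt_hi[OF as_in[of "k - 1"]] k_pos by simp
    ultimately show False using c hi_last by simp
  qed
qed

lemma tau: "i < k \<Longrightarrow> tau w i < n \<and> X (tau w i) = lo (as ! i)"
proof -
  assume i: "i < k"
  have "lo (as ! i) < n" using lo_lt_hi[OF as_in[OF i]] hi_c_le[of w "as ! i"] by simp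
  hence "\<exists>t. t < n \<and> X t = lo (as ! i)" using Xsurj by blast
  from someI_ex[OF this] show ?thesis unfolding tau_def .
qed

lemma tau_L: "i < k \<Longrightarrow> L (tau w i) = as ! i"
  using same_int[of "as ! i" "tau w i"] tau[of i] as_in[of i] lo_lt_hi[OF as_in[of i]] by simp

lemma tau_mk: "i < k \<Longrightarrow> mk w (tau w i)"
  unfolding mk_def using tau tau_L by simp

lemma tau_inj: "i < k \<Longrightarrow> j < k \<Longrightarrow> tau w i = tau w j \<Longrightarrow> i = j"
  using tau lo_as_inj by metis

lemma mk_mod: "mk w t = mk w (t mod n)" unfolding mk_def using Xmod Lmod by metis

lemma mk_tau: "mk w t \<Longrightarrow> \<exists>i<k. t mod n = tau w i \<and> L t = as ! i"
proof -
  assume m: "mk w t"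
  obtain i where i: "i < k" "as ! i = L t" using in_as Lin by blast
  have "X t = X (tau w i)" using m tau[OF i(1)] i(2) unfolding mk_def by simp
  hence "t mod n = tau w i mod n" by (rule Xinj)
  thus ?thesis using tau[OF i(1)] i by auto
qed

lemma tau0: "tau w 0 = 0"
proof -
  have "X 0 = X (tau w 0)" using tau[OF k_pos] X0 lo_as0 by simp
  hence "0 mod n = tau w 0 mod n" by (rule Xinj)
  thus ?thesis using tau[OF k_pos] by simp
qed

lemma tau_last: "tau w (k - 1) = n - 1"
proof -
  have e: "X n = 0" using Xn[of 0] X0 by simp
  have s: "X n + lo (L (n - 1)) + hi (L (n - 1)) = X (n - 1) + n" using stp[of "n - 1"] n0 by simp
  have "X (n - 1) < hi (L (n - 1))" "lo (L (n - 1)) \<le> X (n - 1)" "hi (L (n - 1)) \<le> n"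
    using bnd hi_c_le by auto
  hence h: "hi (L (n - 1)) = n" "X (n - 1) = lo (L (n - 1))" using s e by linarith+
  hence "L (n - 1) = as ! (k - 1)" using hi_n Lin by blast
  hence "X (n - 1) = X (tau w (k - 1))" using h tau[of "k - 1"] k_pos by simp
  hence "(n - 1) mod n = tau w (k - 1) mod n" by (rule Xinj)
  thus ?thesis using tau[of "k - 1"] k_pos n0 by simp
qed

lemma X_suc_tau: "i < k \<Longrightarrow> X (Suc (tau w i)) + hi (as ! i) = n"
  using stp[of "tau w i"] tau[of i] tau_L[of i] by simp

lemma tau_lt_last: "Suc i < k \<Longrightarrow> tau w i < n - 1"
proof -
  assume i: "Suc i < k"
  have "tau w i \<noteq> tau w (k - 1)" using tau_inj[of i "k - 1"] i by auto
  moreover have "tau w i < n" using tau[of i] i by simp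
  ultimately show ?thesis using tau_last by linarith
qed

lemma tau_pos: "0 < i \<Longrightarrow> i < k \<Longrightarrow> 0 < tau w i"
  using tau_inj[of i 0] tau0 k_pos by (cases "tau w i") auto

lemma mk_n: "mk w n"
  unfolding mk_def using Xn[of 0] Ln[of 0] X0 L0 lo_as0 by simp

end

definition Lm :: "'a::linorder list \<Rightarrow> nat \<Rightarrow> nat" where
  "Lm w \<mu> = (LEAST m. mk w (Suc (tau w \<mu>) + m))"
definition nx :: "'a::linorder list \<Rightarrow> nat \<Rightarrow> nat" where
  "nx w \<mu> = (SOME l. l < length (sorted_list_of_set (set w)) \<and> tau w l = Suc (tau w \<mu>) + Lm w \<mu>)"

context
  fixes w :: "'a::linorder list"
  assumes prim: "primitive w" and pcw: "perfectly_clustering w" and lyn: "lyndon w"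
begin

abbreviation "\<tau> \<equiv> tau w"

lemmas n0' = n0[OF prim pcw lyn]
lemmas stp' = stp[OF prim pcw lyn]
lemmas bnd' = bnd[OF prim pcw lyn]
lemmas Xlt' = Xlt[OF prim pcw lyn]
lemmas Xmod' = Xmod[OF prim pcw lyn]
lemmas Lmod' = Lmod[OF prim pcw lyn]
lemmas Xinj' = Xinj[OF prim pcw lyn]
lemmas Xsurj' = Xsurj[OF prim pcw lyn]
lemmas X0' = X0[OF prim pcw lyn]
lemmas Lin' = Lin[OF prim pcw lyn]
lemmas Xn' = Xn[OF prim pcw lyn]
lemmas Ln' = Ln[OF prim pcw lyn]
lemmas same_int' = same_int[OF prim pcw lyn]
lemmas RR' = RR[OF prim pcw lyn]
lemmas suc_mod_cancel' = suc_mod_cancel[OF prim pcw lyn]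
lemmas tau' = tau[OF prim pcw lyn]
lemmas tau_L' = tau_L[OF prim pcw lyn]
lemmas tau_mk' = tau_mk[OF prim pcw lyn]
lemmas tau_inj' = tau_inj[OF prim pcw lyn]
lemmas mk_mod' = mk_mod[OF prim pcw lyn]
lemmas mk_tau' = mk_tau[OF prim pcw lyn]
lemmas tau0' = tau0[OF prim pcw lyn]
lemmas tau_last' = tau_last[OF prim pcw lyn]
lemmas X_suc_tau' = X_suc_tau[OF prim pcw lyn]
lemmas tau_lt_last' = tau_lt_last[OF prim pcw lyn]
lemmas tau_pos' = tau_pos[OF prim pcw lyn]
lemmas mk_n' = mk_n[OF prim pcw lyn]
lemmas hi_lo_cons' = hi_lo_cons[OF prim pcw lyn]
lemmas lo_as0' = lo_as0[OF prim pcw lyn]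
lemmas k_pos' = k_pos[OF prim pcw lyn]
lemmas Xinj_lt' = Xinj_lt[OF prim pcw lyn]

lemma adj_step:
  assumes h: "(X w) a + (X w) (Suc b) = (n w)" and nm: "\<not> mk w a"
  shows "(X w) (Suc a) + (X w) b = (n w) \<and> (L w) a = (L w) b"
proof -
  define c where "c = (L w) a"
  have bb: "(lo w) c \<le> (X w) a" "(X w) a < (hi w) c" using bnd'[of a] c_def by auto
  have gt: "(lo w) c < (X w) a" using nm bb c_def unfolding mk_def by simp
  have pn: "(X w) a - 1 < (n w)" using Xlt'[of a] by simp
  obtain a0 where a0: "a0 < (n w)" "(X w) a0 = (X w) a - 1" using Xsurj'[OF pn] by blast
  have "(lo w) c \<le> (X w) a0" "(X w) a0 < (hi w) c" using a0 gt bb by linarith+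
  hence La0: "(L w) a0 = c" using same_int'[of c a0] Lin'[of a] c_def by simp
  have "(X w) a0 + (X w) (Suc b) + 1 = (n w)" using a0 h gt by linarith
  hence r: "(X w) (Suc a0) + (X w) b + 1 = (n w)" "(L w) a0 = (L w) b" using RR'[of a0 b] by auto
  have s1: "(X w) (Suc a0) + (lo w) c + (hi w) c = (X w) a0 + (n w)" using stp'[of a0] La0 by simp
  have s2: "(X w) (Suc a) + (lo w) c + (hi w) c = (X w) a + (n w)" using stp'[of a] c_def by simp
  have "(X w) (Suc a) + (X w) b = (n w)" using s1 s2 r(1) a0(2) gt by linarith
  thus ?thesis using r(2) La0 c_def by simp
qed

lemma chain_inv:
  assumes mu: "Suc \<mu> < (k w)"
  shows "m < (n w) \<Longrightarrow> (\<forall>m'<m. \<not> mk w (Suc (\<tau> \<mu>) + m')) \<Longrightarrow>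
    (X w) (Suc (\<tau> \<mu>) + m) + (X w) (\<tau> (Suc \<mu>) + (n w) - m) = (n w)"
proof (induction m)
  case 0
  have "(X w) (Suc (\<tau> \<mu>)) + (hi w) ((as w) ! \<mu>) = (n w)" using X_suc_tau'[of \<mu>] mu by simp
  moreover have "(hi w) ((as w) ! \<mu>) = (lo w) ((as w) ! Suc \<mu>)" using hi_lo_cons' mu by simp
  moreover have "(X w) (\<tau> (Suc \<mu>) + (n w)) = (lo w) ((as w) ! Suc \<mu>)" using Xn' tau'[OF mu] by simp
  ultimately show ?case by simp
next
  case (Suc m)
  have ih: "(X w) (Suc (\<tau> \<mu>) + m) + (X w) (\<tau> (Suc \<mu>) + (n w) - m) = (n w)" using Suc by simp
  have nm: "\<not> mk w (Suc (\<tau> \<mu>) + m)" using Suc.prems by simp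
  have e: "\<tau> (Suc \<mu>) + (n w) - m = Suc (\<tau> (Suc \<mu>) + (n w) - Suc m)" using Suc.prems by simp
  have "(X w) (Suc (\<tau> \<mu>) + m) + (X w) (Suc (\<tau> (Suc \<mu>) + (n w) - Suc m)) = (n w)" using ih e by simp
  hence "(X w) (Suc (Suc (\<tau> \<mu>) + m)) + (X w) (\<tau> (Suc \<mu>) + (n w) - Suc m) = (n w)" using adj_step nm by blast
  thus ?case by simp
qed

lemma chain_L:
  assumes mu: "Suc \<mu> < (k w)" and m: "Suc m < (n w)" and nm: "\<forall>m'\<le>m. \<not> mk w (Suc (\<tau> \<mu>) + m')"
  shows "(L w) (Suc (\<tau> \<mu>) + m) = (L w) (\<tau> (Suc \<mu>) + (n w) - Suc m)"
proof -
  have ih: "(X w) (Suc (\<tau> \<mu>) + m) + (X w) (\<tau> (Suc \<mu>) + (n w) - m) = (n w)"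
    using chain_inv[OF mu, of m] m nm by simp
  have e: "\<tau> (Suc \<mu>) + (n w) - m = Suc (\<tau> (Suc \<mu>) + (n w) - Suc m)" using m by simp
  have "(X w) (Suc (\<tau> \<mu>) + m) + (X w) (Suc (\<tau> (Suc \<mu>) + (n w) - Suc m)) = (n w)" using ih e by simp
  thus ?thesis using adj_step nm by blast
qed

lemma Lm_props:
  assumes mu: "Suc \<mu> < (k w)"
  shows "Suc (\<tau> \<mu>) + Lm w \<mu> < (n w)" "mk w (Suc (\<tau> \<mu>) + Lm w \<mu>)"
    "\<And>m. m < Lm w \<mu> \<Longrightarrow> \<not> mk w (Suc (\<tau> \<mu>) + m)"
proof -
  have lt: "\<tau> \<mu> < (n w) - 1" using tau_lt_last' mu by simp
  define m0 where "m0 = (n w) - 1 - Suc (\<tau> \<mu>)"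
  have "Suc (\<tau> \<mu>) + m0 = \<tau> ((k w) - 1)" using lt tau_last' unfolding m0_def by simp
  hence mk0: "mk w (Suc (\<tau> \<mu>) + m0)" using tau_mk'[of "(k w) - 1"] k_pos' by simp
  have "Lm w \<mu> \<le> m0" unfolding Lm_def using mk0 by (rule Least_le)
  thus "Suc (\<tau> \<mu>) + Lm w \<mu> < (n w)" using lt unfolding m0_def by simp
  show "mk w (Suc (\<tau> \<mu>) + Lm w \<mu>)" unfolding Lm_def using mk0 by (rule LeastI)
  show "\<And>m. m < Lm w \<mu> \<Longrightarrow> \<not> mk w (Suc (\<tau> \<mu>) + m)" unfolding Lm_def by (rule not_less_Least)
qed

lemma chain_main:
  assumes mu: "Suc \<mu> < (k w)"
  shows "nx w \<mu> < (k w) \<and> 0 < nx w \<mu> \<and> \<tau> (nx w \<mu>) = Suc (\<tau> \<mu>) + Lm w \<mu>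
    \<and> Lm w \<mu> < \<tau> (Suc \<mu>) \<and> \<tau> (nx w \<mu> - 1) = \<tau> (Suc \<mu>) - Suc (Lm w \<mu>)
    \<and> (\<forall>m. 1 \<le> m \<and> m \<le> Lm w \<mu> \<longrightarrow> \<not> mk w (\<tau> (Suc \<mu>) - m))
    \<and> (\<forall>m < Lm w \<mu>. (L w) (Suc (\<tau> \<mu>) + m) = (L w) (\<tau> (Suc \<mu>) - Suc m))"
proof -
  define Am where "Am = Suc (\<tau> \<mu>)"
  define T1 where "T1 = \<tau> (Suc \<mu>)"
  define lm where "lm = Lm w \<mu>"
  note LP = Lm_props[OF mu, folded Am_def lm_def]
  have T1n: "T1 < (n w)" using tau'[OF mu] T1_def by simp
  have inv: "(X w) (Am + m) + (X w) (T1 + (n w) - m) = (n w)" if "m \<le> lm" for m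
    using chain_inv[OF mu, of m] LP that unfolding Am_def T1_def by simp
  obtain l where l: "l < (k w)" "(Am + lm) mod (n w) = \<tau> l" "(L w) (Am + lm) = (as w) ! l" using mk_tau'[OF LP(2)] by blast
  have Al: "Am + lm = \<tau> l" using l LP(1) by simp
  have l0: "l \<noteq> 0"
  proof
    assume "l = 0"
    hence "(X w) (Am + lm) = 0" using Al tau'[of 0] lo_as0' k_pos' by simp
    hence "(X w) (T1 + (n w) - lm) = (n w)" using inv[of lm] by simp
    thus False using Xlt' by (metis less_irrefl)
  qed
  then obtain l' where l': "l = Suc l'" by (cases l) auto
  have nxl: "nx w \<mu> = l"
  proof -
    have ex: "l < (k w) \<and> \<tau> l = Suc (\<tau> \<mu>) + Lm w \<mu>" using l Al Am_def lm_def by simp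
    have "nx w \<mu> < (k w) \<and> \<tau> (nx w \<mu>) = Suc (\<tau> \<mu>) + Lm w \<mu>"
      unfolding nx_def by (rule someI[of "\<lambda>l. l < (k w) \<and> \<tau> l = Suc (\<tau> \<mu>) + Lm w \<mu>"]) (rule ex)
    thus ?thesis using tau_inj'[of "nx w \<mu>" l] ex by simp
  qed
  have XA: "(X w) (Am + lm) = (hi w) ((as w) ! l')" using Al tau'[OF l(1)] hi_lo_cons'[of l'] l(1) l' by simp
  have XB: "(X w) (T1 + (n w) - lm) = (X w) (Suc (\<tau> l'))" using inv[of lm] XA X_suc_tau'[of l'] l(1) l' by simp
  have backnm: "\<not> mk w (T1 - m)" if m: "1 \<le> m" "m \<le> lm" "m \<le> T1" for m
  proof
    assume mk: "mk w (T1 - m)"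
    have "T1 + (n w) - m = (T1 - m) + (n w)" using m by simp
    hence "(T1 + (n w) - m) mod (n w) = (T1 - m) mod (n w)" by simp
    hence mk': "mk w (T1 + (n w) - m)" using mk mk_mod'[of "T1 + (n w) - m"] mk_mod'[of "T1 - m"] by simp
    obtain q where q: "q < (k w)" "(T1 + (n w) - m) mod (n w) = \<tau> q" "(L w) (T1 + (n w) - m) = (as w) ! q"
      using mk_tau'[OF mk'] by blast
    have XBm: "(X w) (T1 + (n w) - m) = (lo w) ((as w) ! q)" using q Xmod'[of "T1 + (n w) - m"] tau'[OF q(1)] by simp
    have iv: "(X w) (Am + m) + (X w) (T1 + (n w) - m) = (n w)" using inv m by simp
    have q0: "q \<noteq> 0"
    proof
      assume "q = 0"
      hence "(X w) (Am + m) = (n w)" using iv XBm lo_as0' by simp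
      thus False using Xlt' by (metis less_irrefl)
    qed
    then obtain q' where q': "q = Suc q'" by (cases q) auto
    have h1: "(hi w) ((as w) ! q') = (lo w) ((as w) ! q)" using hi_lo_cons'[of q'] q(1) q' by simp
    have h2: "(X w) (Suc (\<tau> q')) + (hi w) ((as w) ! q') = (n w)" using X_suc_tau'[of q'] q(1) q' by simp
    have iv': "(X w) (Am + m) + (lo w) ((as w) ! q) = (n w)" using iv XBm by simp
    have "(X w) (Am + m) + (hi w) ((as w) ! q') = (X w) (Suc (\<tau> q')) + (hi w) ((as w) ! q')"
      using iv' h1 h2 by simp
    hence "(X w) (Am + m) = (X w) (Suc (\<tau> q'))" by simp
    hence "(Am + m) mod (n w) = Suc (\<tau> q') mod (n w)" by (rule Xinj')
    hence "Suc (\<tau> \<mu> + m) mod (n w) = Suc (\<tau> q') mod (n w)" using Am_def by simp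
    hence "(\<tau> \<mu> + m) mod (n w) = \<tau> q' mod (n w)" by (rule suc_mod_cancel')
    hence "mk w (\<tau> \<mu> + m)" using mk_mod'[of "\<tau> \<mu> + m"] mk_mod'[of "\<tau> q'"] tau_mk'[of q'] q(1) q' by simp
    moreover have "\<tau> \<mu> + m = Am + (m - 1)" using m Am_def by simp
    moreover have "m - 1 < lm" using m by simp
    ultimately show False using LP(3) by simp
  qed
  have lmT: "lm < T1"
  proof (rule ccontr)
    assume "\<not> lm < T1"
    hence "T1 \<le> lm" by simp
    moreover have "1 \<le> T1" using tau_pos'[of "Suc \<mu>"] mu T1_def by simp
    ultimately have "\<not> mk w (T1 - T1)" using backnm[of T1] by simp
    thus False using tau0' tau_mk'[OF k_pos'] by simp
  qed
  have "(T1 + (n w) - lm) mod (n w) = Suc (\<tau> l') mod (n w)" using XB by (rule Xinj')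
  moreover have e: "T1 + (n w) - lm = Suc (T1 - Suc lm) + (n w)" using lmT by simp
  moreover have "(Suc (T1 - Suc lm) + (n w)) mod (n w) = Suc (T1 - Suc lm) mod (n w)" by (rule mod_add_self2)
  ultimately have "Suc (T1 - Suc lm) mod (n w) = Suc (\<tau> l') mod (n w)" by simp
  hence "(T1 - Suc lm) mod (n w) = \<tau> l' mod (n w)" by (rule suc_mod_cancel')
  moreover have "\<tau> l' < (n w)" using tau'[of l'] l(1) l' by simp
  moreover have "T1 - Suc lm < (n w)" using T1n by simp
  ultimately have tl': "\<tau> l' = T1 - Suc lm" by simp
  have letters: "(L w) (Am + m) = (L w) (T1 - Suc m)" if "m < lm" for m
  proof -
    have c1: "Suc m < n w" using LP(1) that unfolding Am_def by simp
    have c2: "\<forall>m'\<le>m. \<not> mk w (Suc (\<tau> \<mu>) + m')"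
    proof (intro allI impI)
      fix m' assume "m' \<le> m"
      hence "m' < lm" using that by simp
      thus "\<not> mk w (Suc (\<tau> \<mu>) + m')" using LP(3) unfolding Am_def by simp
    qed
    have "(L w) (Am + m) = (L w) (T1 + (n w) - Suc m)"
      using chain_L[OF mu c1 c2] unfolding Am_def T1_def by simp
    moreover have "T1 + (n w) - Suc m = (T1 - Suc m) + (n w)" using that lmT by simp
    ultimately show ?thesis using Ln' by simp
  qed
  have backnm2: "\<forall>m. 1 \<le> m \<and> m \<le> lm \<longrightarrow> \<not> mk w (T1 - m)" using backnm lmT by simp
  show ?thesis using nxl l(1) l' Al tl' lmT backnm2 letters unfolding Am_def T1_def lm_def by simp
qed

end

lemma inv_odd_fix:
  assumes "finite A" "\<forall>a\<in>A. f a \<in> A \<and> f (f a) = a" "odd (card A)"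
  shows "\<exists>a\<in>A. f a = a"
  using assms
proof (induction "card A" arbitrary: A rule: less_induct)
  case less
  show ?case
  proof (rule ccontr)
    assume nf: "\<not> (\<exists>a\<in>A. f a = a)"
    have "A \<noteq> {}" using less.prems(3) by auto
    then obtain a where a: "a \<in> A" by blast
    have fa: "f a \<in> A" "f a \<noteq> a" using a less.prems(2) nf by auto
    define A' where "A' = A - {a, f a}"
    have cA': "card A' = card A - 2" unfolding A'_def using a fa less.prems(1) by (simp add: card_Diff_subset)
    have "card A \<ge> 2"
    proof -
      have "{a, f a} \<subseteq> A" using a fa by auto
      hence "card {a, f a} \<le> card A" using less.prems(1) by (rule card_mono[rotated])
      thus ?thesis using fa by simp
    qed
    hence lt: "card A' < card A" using cA' by simp
    have fin: "finite A'" unfolding A'_def using less.prems(1) by simp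
    have cl: "\<forall>b\<in>A'. f b \<in> A' \<and> f (f b) = b"
    proof
      fix b assume b: "b \<in> A'"
      have "b \<in> A" "b \<noteq> a" "b \<noteq> f a" using b unfolding A'_def by auto
      have ffb: "f (f b) = b" using \<open>b \<in> A\<close> less.prems(2) by auto
      have ffa: "f (f a) = a" using a less.prems(2) by auto
      have "f b \<noteq> a" using ffb \<open>b \<noteq> f a\<close> by auto
      moreover have "f b \<noteq> f a" using ffb ffa \<open>b \<noteq> a\<close> by metis
      moreover have "f b \<in> A" using \<open>b \<in> A\<close> less.prems(2) by auto
      ultimately show "f b \<in> A' \<and> f (f b) = b" unfolding A'_def using ffb by auto
    qed
    have "odd (card A')" using cA' less.prems(3) \<open>card A \<ge> 2\<close> by simp
    then obtain b where "b \<in> A'" "f b = b" using less.hyps[OF lt fin cl] by blast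
    thus False using nf unfolding A'_def by auto
  qed
qed

lemma pal_odd:
  assumes "rev p = p" "odd (count_list p c)"
  shows "c = p ! (length p div 2)"
proof -
  define A where "A = {i. i < length p \<and> p ! i = c}"
  have cA: "card A = count_list p c"
    unfolding A_def count_list_eq_length_filter length_filter_conv_card by (simp add: eq_commute)
  have inv: "\<forall>i\<in>A. (length p - 1 - i) \<in> A \<and> (length p - 1 - (length p - 1 - i)) = i"
  proof
    fix i assume i: "i \<in> A"
    have "p ! (length p - 1 - i) = rev p ! i" using i unfolding A_def by (simp add: rev_nth)
    hence "p ! (length p - 1 - i) = c" using assms(1) i unfolding A_def by simp
    thus "(length p - 1 - i) \<in> A \<and> (length p - 1 - (length p - 1 - i)) = i" using i unfolding A_def by auto
  qed
  obtain i where i: "i \<in> A" "length p - 1 - i = i"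
    using inv_odd_fix[of A "\<lambda>i. length p - 1 - i"] inv assms(2) cA unfolding A_def by auto
  have "i = length p div 2" using i unfolding A_def by auto
  thus ?thesis using i unfolding A_def by auto
qed

lemma odd_letters_le2:
  assumes "w = x @ y" "rev x = x" "rev y = y"
  shows "card {c \<in> set w. odd (count_list w c)} \<le> 2"
proof -
  have "{c \<in> set w. odd (count_list w c)} \<subseteq> {x ! (length x div 2), y ! (length y div 2)}"
  proof
    fix c assume "c \<in> {c \<in> set w. odd (count_list w c)}"
    hence "odd (count_list x c + count_list y c)" using assms(1) by simp
    hence "odd (count_list x c) \<or> odd (count_list y c)" by auto
    thus "c \<in> {x ! (length x div 2), y ! (length y div 2)}"
    proof (elim disjE)
      assume "odd (count_list x c)"
      hence "c = x ! (length x div 2)" by (rule pal_odd[OF assms(2)])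
      thus ?thesis by simp
    next
      assume "odd (count_list y c)"
      hence "c = y ! (length y div 2)" by (rule pal_odd[OF assms(3)])
      thus ?thesis by simp
    qed
  qed
  hence "card {c \<in> set w. odd (count_list w c)} \<le> card {x ! (length x div 2), y ! (length y div 2)}"
    by (rule card_mono[rotated]) simp
  also have "\<dots> \<le> 2" by (simp add: card_insert_le_m1)
  finally show ?thesis .
qed

definition inseg :: "'a::linorder list \<Rightarrow> nat \<Rightarrow> nat \<Rightarrow> bool" where
  "inseg w \<mu> t = (Suc \<mu> < length (sorted_list_of_set (set w)) \<and> tau w \<mu> < t \<and> t \<le> tau w \<mu> + Lm w \<mu>)"
definition sg :: "'a::linorder list \<Rightarrow> nat \<Rightarrow> nat" where
  "sg w t = (THE \<mu>. inseg w \<mu> t)"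
definition th :: "'a::linorder list \<Rightarrow> nat \<Rightarrow> nat" where
  "th w t = tau w (sg w t) + tau w (Suc (sg w t)) - t"

context
  fixes w :: "'a::linorder list"
  assumes prim: "primitive w" and pcw: "perfectly_clustering w" and lyn: "lyndon w"
begin

lemmas CM = chain_main[OF prim pcw lyn]
lemmas LmP = Lm_props[OF prim pcw lyn]
lemmas tau'' = tau[OF prim pcw lyn]
lemmas tau_mk'' = tau_mk[OF prim pcw lyn]
lemmas tau_inj'' = tau_inj[OF prim pcw lyn]
lemmas tau0'' = tau0[OF prim pcw lyn]
lemmas tau_last'' = tau_last[OF prim pcw lyn]
lemmas k_pos'' = k_pos[OF prim pcw lyn]
lemmas mk_tau'' = mk_tau[OF prim pcw lyn]
lemmas tau_L'' = tau_L[OF prim pcw lyn]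
lemmas n0'' = n0[OF prim pcw lyn]

lemma nu_props:
  assumes mu: "Suc \<mu> < k w"
  shows "Suc (nx w \<mu> - 1) < k w \<and> Lm w (nx w \<mu> - 1) = Lm w \<mu> \<and> nx w (nx w \<mu> - 1) = Suc \<mu>"
proof -
  define \<nu> where "\<nu> = nx w \<mu> - 1"
  define lm where "lm = Lm w \<mu>"
  define T where "T = tau w (Suc \<mu>)"
  note C = CM[OF mu, folded \<nu>_def lm_def T_def]
  have nk: "Suc \<nu> < k w" using C unfolding \<nu>_def by simp
  have tn: "tau w \<nu> = T - Suc lm" using C by simp
  have lmT: "lm < T" using C by simp
  have nm: "\<not> mk w (Suc (tau w \<nu>) + m)" if "m < lm" for m
  proof -
    have eq: "Suc (tau w \<nu>) + m = T - (lm - m)" using tn lmT that by simp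
    have BK: "\<forall>m. 1 \<le> m \<and> m \<le> lm \<longrightarrow> \<not> mk w (T - m)" using C by blast
    have "1 \<le> lm - m" "lm - m \<le> lm" using that by auto
    hence "\<not> mk w (T - (lm - m))" using BK by blast
    thus ?thesis unfolding eq .
  qed
  have mkl: "mk w (Suc (tau w \<nu>) + lm)"
  proof -
    have "Suc (tau w \<nu>) + lm = T" using tn lmT by simp
    thus ?thesis using tau_mk''[OF mu] T_def by simp
  qed
  have Lmn: "Lm w \<nu> = lm"
    unfolding Lm_def
  proof (rule Least_equality)
    show "mk w (Suc (tau w \<nu>) + lm)" by (rule mkl)
    show "lm \<le> y" if "mk w (Suc (tau w \<nu>) + y)" for y using nm that by (meson not_le)
  qed
  have "tau w (nx w \<nu>) = Suc (tau w \<nu>) + Lm w \<nu>" using CM[OF nk] by simp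
  also have "\<dots> = T" using Lmn tn lmT by simp
  finally have "tau w (nx w \<nu>) = tau w (Suc \<mu>)" using T_def by simp
  hence "nx w \<nu> = Suc \<mu>" using tau_inj''[of "nx w \<nu>" "Suc \<mu>"] CM[OF nk] mu by simp
  thus ?thesis using nk Lmn unfolding \<nu>_def lm_def by simp
qed

lemma seg_ex:
  assumes t: "t < n w" "\<not> mk w t"
  shows "\<exists>\<mu>. inseg w \<mu> t"
proof -
  define M where "M = {i. i < k w \<and> tau w i < t}"
  have t0: "t \<noteq> 0"
  proof
    assume "t = 0"
    thus False using t(2) tau_mk''[OF k_pos''] tau0'' by simp
  qed
  have "0 \<in> M" unfolding M_def using k_pos'' tau0'' t0 by simp
  have finM: "finite M" unfolding M_def by simp
  define tm where "tm = Max (tau w ` M)"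
  have "tm \<in> tau w ` M" unfolding tm_def using finM \<open>0 \<in> M\<close> by (intro Max_in) auto
  then obtain \<mu> where mu: "\<mu> \<in> M" "tau w \<mu> = tm" by blast
  have mx: "tau w i \<le> tau w \<mu>" if "i \<in> M" for i using mu that finM unfolding tm_def by simp
  have "t \<noteq> n w - 1" using t tau_mk''[of "k w - 1"] tau_last'' k_pos'' by auto
  hence "t < n w - 1" using t by simp
  have "\<mu> \<noteq> k w - 1" using mu \<open>t < n w - 1\<close> tau_last'' unfolding M_def by auto
  moreover have "\<mu> < k w" using mu unfolding M_def by simp
  ultimately have smu: "Suc \<mu> < k w" by linarith
  note C = CM[OF smu]
  have "t \<le> tau w \<mu> + Lm w \<mu>"
  proof (rule ccontr)
    assume "\<not> t \<le> tau w \<mu> + Lm w \<mu>"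
    hence "tau w (nx w \<mu>) \<le> t" using C by simp
    moreover have "tau w (nx w \<mu>) \<noteq> t" using tau_mk''[of "nx w \<mu>"] C t by auto
    ultimately have "nx w \<mu> \<in> M" unfolding M_def using C by simp
    hence "tau w (nx w \<mu>) \<le> tau w \<mu>" by (rule mx)
    thus False using C by simp
  qed
  thus ?thesis unfolding inseg_def using smu mu unfolding M_def by auto
qed

lemma inseg_nm: "inseg w \<mu> t \<Longrightarrow> \<not> mk w t \<and> t < n w"
proof -
  assume s: "inseg w \<mu> t"
  hence smu: "Suc \<mu> < k w" and a: "tau w \<mu> < t" "t \<le> tau w \<mu> + Lm w \<mu>" unfolding inseg_def by auto
  have "t = Suc (tau w \<mu>) + (t - Suc (tau w \<mu>))" using a by simp
  moreover have "t - Suc (tau w \<mu>) < Lm w \<mu>" using a by simp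
  ultimately have "\<not> mk w t" using LmP(3)[OF smu] by metis
  moreover have "t < n w" using LmP(1)[OF smu] a by simp
  ultimately show ?thesis by simp
qed

lemma seg_uniq:
  assumes "inseg w \<mu> t" "inseg w \<mu>' t"
  shows "\<mu> = \<mu>'"
proof (rule ccontr)
  assume ne: "\<mu> \<noteq> \<mu>'"
  { fix a b assume ab: "inseg w a t" "inseg w b t" "tau w a < tau w b"
    have sa: "Suc a < k w" "tau w a < t" "t \<le> tau w a + Lm w a" using ab(1) unfolding inseg_def by auto
    have sb: "Suc b < k w" "tau w b < t" using ab(2) unfolding inseg_def by auto
    have "tau w b = Suc (tau w a) + (tau w b - Suc (tau w a))" using ab(3) by simp
    moreover have "tau w b - Suc (tau w a) < Lm w a" using sa sb ab(3) by simp
    ultimately have "\<not> mk w (tau w b)" using LmP(3)[OF sa(1)] by metis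
    hence False using tau_mk''[of b] sb by simp }
  moreover have "tau w \<mu> \<noteq> tau w \<mu>'"
    using ne tau_inj''[of \<mu> \<mu>'] assms unfolding inseg_def by auto
  ultimately show False using assms by (meson linorder_neqE_nat)
qed

lemma sg_inseg: "t < n w \<Longrightarrow> \<not> mk w t \<Longrightarrow> inseg w (sg w t) t"
  unfolding sg_def using seg_ex seg_uniq by (metis theI)

lemma sg_eq: "inseg w \<mu> t \<Longrightarrow> sg w t = \<mu>"
  unfolding sg_def using seg_uniq by blast

lemma th_props:
  assumes t: "t < n w" "\<not> mk w t"
  defines "\<mu> \<equiv> sg w t"
  shows "inseg w (nx w \<mu> - 1) (th w t) \<and> LL w (th w t) = LL w t \<and> th w (th w t) = t
         \<and> (th w t = t \<longrightarrow> nx w \<mu> - 1 = \<mu> \<and> 2 * t = tau w \<mu> + tau w (Suc \<mu>))"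
proof -
  have s: "inseg w \<mu> t" using sg_inseg[OF t] \<mu>_def by simp
  hence smu: "Suc \<mu> < k w" and a: "tau w \<mu> < t" "t \<le> tau w \<mu> + Lm w \<mu>" unfolding inseg_def by auto
  define m where "m = t - Suc (tau w \<mu>)"
  define lm where "lm = Lm w \<mu>"
  define T where "T = tau w (Suc \<mu>)"
  define \<nu> where "\<nu> = nx w \<mu> - 1"
  note C = CM[OF smu, folded \<nu>_def lm_def T_def]
  note NU = nu_props[OF smu, folded \<nu>_def lm_def]
  have tm: "t = Suc (tau w \<mu>) + m" "m < lm" using a unfolding m_def lm_def by auto
  have thv: "th w t = T - Suc m" unfolding th_def \<mu>_def[symmetric] T_def[symmetric] using tm C by simp
  have lmT: "lm < T" using C by simp
  have tnu: "tau w \<nu> = T - Suc lm" using C by simp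
  have s2: "inseg w \<nu> (th w t)" unfolding inseg_def using NU thv tnu tm lmT by auto
  have L2: "LL w (th w t) = LL w t" using C thv tm by simp
  have sg2: "sg w (th w t) = \<nu>" using sg_eq[OF s2] .
  have snu: "Suc \<nu> = nx w \<mu>" using C unfolding \<nu>_def by simp
  have "tau w (Suc \<nu>) = Suc (tau w \<mu>) + lm" unfolding snu using C by simp
  have "th w (th w t) = tau w (sg w (th w t)) + tau w (Suc (sg w (th w t))) - th w t" by (rule th_def)
  also have "\<dots> = tau w \<nu> + tau w (Suc \<nu>) - (T - Suc m)" using sg2 thv by simp
  also have "\<dots> = t" using \<open>tau w (Suc \<nu>) = Suc (tau w \<mu>) + lm\<close> tnu tm lmT by simp
  finally have tt: "th w (th w t) = t" .
  have fx: "th w t = t \<longrightarrow> \<nu> = \<mu> \<and> 2 * t = tau w \<mu> + tau w (Suc \<mu>)"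
  proof
    assume e: "th w t = t"
    hence "\<nu> = \<mu>" using sg2 \<mu>_def by simp
    moreover have "2 * t = tau w \<mu> + tau w (Suc \<mu>)" using e thv tm lmT T_def by simp
    ultimately show "\<nu> = \<mu> \<and> 2 * t = tau w \<mu> + tau w (Suc \<mu>)" by simp
  qed
  show ?thesis using s2 L2 tt fx unfolding \<nu>_def by simp
qed

end

lemma drop_last1: "w \<noteq> [] \<Longrightarrow> drop (length w - 1) w = [w ! (length w - 1)]"
  by (induction w) (auto simp: drop_Cons' nth_Cons')

lemma decomp:
  fixes w as :: "'a list" and T :: "nat \<Rightarrow> nat"
  assumes la: "length as = Suc K" and mono: "\<And>i. i < K \<Longrightarrow> T i < T (Suc i)"
    and TK: "T K = length w - 1" and lets: "\<And>i. i \<le> K \<Longrightarrow> w ! T i = as ! i"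
    and T0: "T 0 = 0" and wne: "w \<noteq> []"
  shows "w = concat (map2 (\<lambda>a p. a # p) as
            (map (\<lambda>i. take (T (Suc i) - Suc (T i)) (drop (Suc (T i)) w)) [0..<K] @ [[]]))"
proof -
  define P where "P i = take (T (Suc i) - Suc (T i)) (drop (Suc (T i)) w)" for i
  have monoi: "T i \<le> T j" if "i \<le> j" "j \<le> K" for i j
    using that
  proof (induction j)
    case 0 thus ?case by simp
  next
    case (Suc j)
    show ?case
    proof (cases "i = Suc j")
      case True thus ?thesis by simp
    next
      case False
      hence "T i \<le> T j" using Suc by simp
      also have "\<dots> \<le> T (Suc j)" using mono[of j] Suc.prems by simp
      finally show ?thesis .
    qed
  qed
  have Tlt: "T j < length w" if "j \<le> K" for j
  proof -
    have "T j \<le> T K" using monoi[of j K] that by simp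
    thus ?thesis using TK wne by (cases w) auto
  qed
  have claim: "\<forall>j. K - j = d \<longrightarrow> j \<le> K \<longrightarrow>
      drop (T j) w = concat (map2 (\<lambda>a p. a # p) (drop j as) (map P [j..<K] @ [[]]))" for d
  proof (induction d)
    case 0
    show ?case
    proof (intro allI impI)
      fix j assume j: "K - j = 0" "j \<le> K"
      hence jK: "j = K" by simp
      have "drop (T K) w = [as ! K]" using TK drop_last1[OF wne] lets[of K] by simp
      moreover have "drop K as = [as ! K]" using la Cons_nth_drop_Suc[of K as] by simp
      ultimately show "drop (T j) w = concat (map2 (\<lambda>a p. a # p) (drop j as) (map P [j..<K] @ [[]]))"
        using jK by simp
    qed
  next
    case (Suc d)
    show ?case
    proof (intro allI impI)
      fix j assume j: "K - j = Suc d" "j \<le> K"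
      hence jK: "j < K" by simp
      have ih: "drop (T (Suc j)) w = concat (map2 (\<lambda>a p. a # p) (drop (Suc j) as) (map P [Suc j..<K] @ [[]]))"
        using Suc.IH j by simp
      have tj: "T j < length w" using Tlt j by simp
      have "drop (T j) w = w ! T j # drop (Suc (T j)) w" using tj by (simp add: Cons_nth_drop_Suc)
      moreover have "drop (Suc (T j)) w = P j @ drop (T (Suc j)) w"
      proof -
        have "drop (Suc (T j)) w = take (T (Suc j) - Suc (T j)) (drop (Suc (T j)) w) @
               drop (T (Suc j) - Suc (T j)) (drop (Suc (T j)) w)" by (rule append_take_drop_id[symmetric])
        moreover have "T (Suc j) - Suc (T j) + Suc (T j) = T (Suc j)" using mono[OF jK] by simp
        ultimately show ?thesis unfolding P_def by (simp add: drop_drop)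
      qed
      moreover have "drop j as = as ! j # drop (Suc j) as" using jK la by (simp add: Cons_nth_drop_Suc)
      moreover have "[j..<K] = j # [Suc j..<K]" using jK by (simp add: upt_conv_Cons)
      ultimately show "drop (T j) w = concat (map2 (\<lambda>a p. a # p) (drop j as) (map P [j..<K] @ [[]]))"
        using ih lets[of j] jK by simp
    qed
  qed
  have "drop (T 0) w = concat (map2 (\<lambda>a p. a # p) (drop 0 as) (map P [0..<K] @ [[]]))"
    using claim[of K] by simp
  thus ?thesis using T0 unfolding P_def by simp
qed

context
  fixes w :: "'a::linorder list"
  assumes prim: "primitive w" and pcw: "perfectly_clustering w" and lyn: "lyndon w"
begin

lemmas CM' = chain_main[OF prim pcw lyn]
lemmas LmP' = Lm_props[OF prim pcw lyn]
lemmas thP = th_props[OF prim pcw lyn]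
lemmas sgI = sg_inseg[OF prim pcw lyn]
lemmas tau3 = tau[OF prim pcw lyn]
lemmas tau_mk3 = tau_mk[OF prim pcw lyn]
lemmas tau_L3 = tau_L[OF prim pcw lyn]
lemmas mk_tau3 = mk_tau[OF prim pcw lyn]
lemmas k_pos3 = k_pos[OF prim pcw lyn]
lemmas tau03 = tau0[OF prim pcw lyn]
lemmas tau_last3 = tau_last[OF prim pcw lyn]
lemmas as_lt3 = as_lt[OF prim pcw lyn]
lemmas in_as3 = in_as[OF prim pcw lyn]
lemmas LL_nth3 = LL_nth[OF prim pcw lyn]
lemmas Ln3 = Ln[OF prim pcw lyn]
lemmas QQ3 = QQ[OF prim pcw lyn]
lemmas QQ_L3 = QQ_L[OF prim pcw lyn]
lemmas Xsurj3 = Xsurj[OF prim pcw lyn]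
lemmas X03 = X0[OF prim pcw lyn]
lemmas L03 = L0[OF prim pcw lyn]
lemmas lo_as03 = lo_as0[OF prim pcw lyn]
lemmas Xn3 = Xn[OF prim pcw lyn]
lemmas n03 = n0[OF prim pcw lyn]
lemmas as_in3 = as_in[OF prim pcw lyn]

lemma as_inj: "i < k w \<Longrightarrow> j < k w \<Longrightarrow> as w ! i = as w ! j \<Longrightarrow> i = j"
  using as_lt3[of i j] as_lt3[of j i] by (metis less_irrefl linorder_neqE_nat)

lemma qsym: "\<exists>x y. w = x @ y \<and> rev x = x \<and> rev y = y"
proof -
  have h0: "lo w (as w ! 0) < hi w (as w ! 0)" using lo_lt_hi[OF as_in3[OF k_pos3]] .
  have "hi w (as w ! 0) - 1 < n w" using hi_c_le[of w "as w ! 0"] h0 by simp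
  then obtain e where e: "e < n w" "X w e = hi w (as w ! 0) - 1" using Xsurj3 by blast
  have inv: "X w (e + n w - t) + X w t + 1 = lo w (L w t) + hi w (L w t)" if "t \<le> e + n w" for t
    using that
  proof (induction t)
    case 0
    have "X w (e + n w) = X w e" using Xn3 by simp
    thus ?case using e X03 L03 lo_as03 h0 by simp
  next
    case (Suc t)
    have "e + n w - t = Suc (e + n w - Suc t)" using Suc.prems by simp
    hence "X w (Suc (e + n w - Suc t)) + X w t + 1 = lo w (L w t) + hi w (L w t)" using Suc by simp
    thus ?case by (rule QQ3)
  qed
  have Lsym: "L w (e + n w - t) = L w t" if "t \<le> e + n w" for t using QQ_L3 inv[OF that] .
  define x where "x = take (Suc e) w"
  define y where "y = drop (Suc e) w"
  have lx: "length x = Suc e" using e unfolding x_def by simp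
  have ly: "length y = n w - Suc e" unfolding y_def by simp
  have "rev x = x"
  proof (rule nth_equalityI)
    show "length (rev x) = length x" by simp
    fix i assume "i < length (rev x)"
    hence i: "i \<le> e" using lx by simp
    have "rev x ! i = w ! (e - i)" using i lx e unfolding x_def by (simp add: rev_nth)
    also have "\<dots> = L w (e - i)" using LL_nth3 e i by simp
    also have "\<dots> = L w (e + n w - i)" using Ln3[of "e - i"] i by (simp add: add.commute)
    also have "\<dots> = L w i" using Lsym[of i] i by simp
    also have "\<dots> = w ! i" using LL_nth3 e i by simp
    also have "\<dots> = x ! i" using i unfolding x_def by simp
    finally show "rev x ! i = x ! i" .
  qed
  moreover have "rev y = y"
  proof (rule nth_equalityI)
    show "length (rev y) = length y" by simp
    fix i assume "i < length (rev y)"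
    hence i: "i < n w - Suc e" using ly by simp
    have "rev y ! i = y ! (length y - Suc i)" using i ly by (simp add: rev_nth)
    also have "\<dots> = w ! (Suc e + (n w - Suc e - Suc i))" using i ly unfolding y_def by simp
    also have "Suc e + (n w - Suc e - Suc i) = n w - 1 - i" using i by linarith
    finally have "rev y ! i = w ! (n w - 1 - i)" .
    also have "\<dots> = L w (n w - 1 - i)" using LL_nth3 i by simp
    also have "\<dots> = L w (e + n w - (Suc e + i))" using i by (simp add: add.commute)
    also have "\<dots> = L w (Suc e + i)" using Lsym[of "Suc e + i"] i by simp
    also have "\<dots> = w ! (Suc e + i)" using LL_nth3 i by simp
    also have "\<dots> = y ! i" using i e unfolding y_def by simp
    finally show "rev y ! i = y ! i" .
  qed
  moreover have "w = x @ y" unfolding x_def y_def by simp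
  ultimately show ?thesis by blast
qed

lemma count_eq:
  assumes c: "c \<in> set w"
  shows "count_list w c = Suc (card {t. t < n w \<and> \<not> mk w t \<and> L w t = c})"
proof -
  obtain i where i: "i < k w" "as w ! i = c" using in_as3 c by blast
  have "count_list w c = card {t. t < n w \<and> w ! t = c}"
    unfolding count_list_eq_length_filter length_filter_conv_card by (simp add: eq_commute)
  also have "{t. t < n w \<and> w ! t = c} = insert (tau w i) {t. t < n w \<and> \<not> mk w t \<and> L w t = c}"
  proof (intro set_eqI iffI)
    fix t assume "t \<in> {t. t < n w \<and> w ! t = c}"
    hence t: "t < n w" "L w t = c" using LL_nth3 by auto
    show "t \<in> insert (tau w i) {t. t < n w \<and> \<not> mk w t \<and> L w t = c}"
    proof (cases "mk w t")
      case True
      then obtain j where j: "j < k w" "t mod n w = tau w j" "L w t = as w ! j" using mk_tau3 by blast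
      have "j = i" using as_inj[of j i] j i t by simp
      thus ?thesis using j t by simp
    next
      case False thus ?thesis using t by simp
    qed
  next
    fix t assume "t \<in> insert (tau w i) {t. t < n w \<and> \<not> mk w t \<and> L w t = c}"
    thus "t \<in> {t. t < n w \<and> w ! t = c}" using tau3[OF i(1)] tau_L3[OF i(1)] i LL_nth3 by auto
  qed
  also have "card \<dots> = Suc (card {t. t < n w \<and> \<not> mk w t \<and> L w t = c})"
    using tau_mk3[OF i(1)] by (subst card_insert_disjoint) auto
  finally show ?thesis .
qed

lemma even_fix:
  assumes c: "c \<in> set w" and ev: "even (count_list w c)"
  shows "\<exists>t. t < n w \<and> \<not> mk w t \<and> L w t = c \<and> th w t = t"
proof -
  define N where "N = {t. t < n w \<and> \<not> mk w t \<and> L w t = c}"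
  have "odd (card N)" using count_eq[OF c] ev unfolding N_def by simp
  moreover have "finite N" unfolding N_def by simp
  moreover have "\<forall>a\<in>N. th w a \<in> N \<and> th w (th w a) = a"
  proof
    fix a assume a: "a \<in> N"
    hence a': "a < n w" "\<not> mk w a" "L w a = c" unfolding N_def by auto
    note T = thP[OF a'(1,2)]
    have "inseg w (nx w (sg w a) - 1) (th w a)" using T by simp
    hence "\<not> mk w (th w a) \<and> th w a < n w" using inseg_nm[OF prim pcw lyn] by blast
    thus "th w a \<in> N \<and> th w (th w a) = a" using T a' unfolding N_def by simp
  qed
  ultimately obtain t where "t \<in> N" "th w t = t" using inv_odd_fix[of N "th w"] by blast
  thus ?thesis unfolding N_def by blast
qed

lemma nu_id: "Suc \<mu> < k w \<Longrightarrow> nx w \<mu> = Suc \<mu>"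
proof (rule ccontr)
  assume mu: "Suc \<mu> < k w" and ne: "nx w \<mu> \<noteq> Suc \<mu>"
  define SP where "SP = {m. Suc m < k w \<and> nx w m - 1 = m}"
  define E where "E = {c \<in> set w. even (count_list w c)}"
  define Od where "Od = {c \<in> set w. odd (count_list w c)}"
  define ft where "ft c = (SOME t. t < n w \<and> \<not> mk w t \<and> L w t = c \<and> th w t = t)" for c
  have ftP: "ft c < n w \<and> \<not> mk w (ft c) \<and> L w (ft c) = c \<and> th w (ft c) = ft c" if "c \<in> E" for c
  proof -
    have c: "c \<in> set w" "even (count_list w c)" using that unfolding E_def by auto
    have ex: "\<exists>t. t < n w \<and> \<not> mk w t \<and> L w t = c \<and> th w t = t" using even_fix[OF c] by blast
    show ?thesis unfolding ft_def by (rule someI_ex[OF ex])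
  qed
  define g where "g c = sg w (ft c)" for c
  have gSP: "g c \<in> SP" if "c \<in> E" for c
  proof -
    note F = ftP[OF that]
    have "inseg w (g c) (ft c)" unfolding g_def using sgI F by blast
    hence "Suc (g c) < k w" unfolding inseg_def by simp
    moreover have "nx w (g c) - 1 = g c" using thP[of "ft c"] F unfolding g_def by simp
    ultimately show ?thesis unfolding SP_def by simp
  qed
  have ginj: "inj_on g E"
  proof (rule inj_onI)
    fix c d assume cd: "c \<in> E" "d \<in> E" "g c = g d"
    note Fc = ftP[OF cd(1)] and Fd = ftP[OF cd(2)]
    have "2 * ft c = tau w (g c) + tau w (Suc (g c))" using thP[of "ft c"] Fc unfolding g_def by simp
    moreover have "2 * ft d = tau w (g d) + tau w (Suc (g d))" using thP[of "ft d"] Fd unfolding g_def by simp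
    ultimately have "ft c = ft d" using cd(3) by simp
    thus "c = d" using Fc Fd by metis
  qed
  have finSP: "finite SP" unfolding SP_def by (rule finite_subset[of _ "{..<k w}"]) auto
  have cE: "card E \<le> card SP"
    using card_inj_on_le[OF ginj _ finSP] gSP by blast
  obtain x y where xy: "w = x @ y" "rev x = x" "rev y = y" using qsym by blast
  have cO: "card Od \<le> 2" using odd_letters_le2[OF xy] unfolding Od_def .
  have "set w = E \<union> Od" "E \<inter> Od = {}" unfolding E_def Od_def by auto
  hence cEO: "card E + card Od = k w" using card_Un_disjoint[of E Od] by (simp add: E_def Od_def)
  define \<nu> where "\<nu> = nx w \<mu> - 1"
  have NU: "Suc \<nu> < k w \<and> nx w \<nu> = Suc \<mu>" using nu_props[OF prim pcw lyn mu] unfolding \<nu>_def by simp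
  have pos: "0 < nx w \<mu>" using CM'[OF mu] by blast
  have nnu: "\<nu> \<noteq> \<mu>" using ne pos unfolding \<nu>_def by linarith
  have "nx w \<mu> - 1 \<noteq> \<mu>" using nnu unfolding \<nu>_def .
  hence "\<mu> \<notin> SP" unfolding SP_def by simp
  moreover have "\<nu> \<notin> SP" unfolding SP_def using NU nnu by simp
  moreover have "SP \<subseteq> {..<k w - 1}" unfolding SP_def by auto
  ultimately have "SP \<subseteq> {..<k w - 1} - {\<mu>, \<nu>}" by auto
  hence "card SP \<le> card ({..<k w - 1} - {\<mu>, \<nu>})" by (rule card_mono[rotated]) simp
  also have "\<dots> = k w - 1 - 2" using mu NU nnu by (subst card_Diff_subset) auto
  finally have "card SP \<le> k w - 3" by simp
  moreover have "2 \<le> k w - 1" using mu NU nnu by auto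
  ultimately show False using cE cO cEO by linarith
qed

theorem i_imp_ii:
  "(\<exists>x y. w = x @ y \<and> palindrome x \<and> palindrome y) \<and>
   (\<exists>ps. special_factorization w ps \<and> (\<forall>p\<in>set ps. palindrome p))"
proof -
  have part1: "\<exists>x y. w = x @ y \<and> palindrome x \<and> palindrome y" using qsym unfolding palindrome_def by blast
  define K where "K = k w - 1"
  define T where "T = tau w"
  have wne: "w \<noteq> []" using prim unfolding primitive_def by simp
  have la: "length (as w) = Suc K" using k_pos3 unfolding K_def by simp
  have step: "T (Suc i) = Suc (T i) + Lm w i" if "i < K" for i
  proof -
    have smu: "Suc i < k w" using that unfolding K_def by simp
    have "tau w (nx w i) = Suc (tau w i) + Lm w i" using CM'[OF smu] by blast
    thus ?thesis using nu_id[OF smu] unfolding T_def by simp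
  qed
  have mono: "T i < T (Suc i)" if "i < K" for i using step[OF that] by simp
  have TK: "T K = length w - 1" using tau_last3 unfolding K_def T_def by simp
  have lets: "w ! T i = as w ! i" if "i \<le> K" for i
  proof -
    have i: "i < k w" using that k_pos3 unfolding K_def by simp
    thus ?thesis using tau_L3[OF i] tau3[OF i] LL_nth3 unfolding T_def by simp
  qed
  have T0: "T 0 = 0" using tau03 unfolding T_def by simp
  define ps where "ps = map (\<lambda>i. take (T (Suc i) - Suc (T i)) (drop (Suc (T i)) w)) [0..<K]"
  have wdec: "w = concat (map2 (\<lambda>a p. a # p) (as w) (ps @ [[]]))"
    unfolding ps_def by (rule decomp[OF la mono TK lets T0 wne])
  have sf: "special_factorization w ps"
    unfolding special_factorization_def using wne wdec k_pos3 unfolding ps_def K_def by simp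
  have pal: "\<forall>p\<in>set ps. palindrome p"
  proof
    fix p assume "p \<in> set ps"
    then obtain i where i: "i < K" "p = take (T (Suc i) - Suc (T i)) (drop (Suc (T i)) w)"
      unfolding ps_def by auto
    have smu: "Suc i < k w" using i unfolding K_def by simp
    note C = CM'[OF smu]
    define lm where "lm = Lm w i"
    have bnd: "Suc (T i) + lm < n w" using LmP'(1)[OF smu] unfolding T_def lm_def by simp
    have pe: "p = take lm (drop (Suc (T i)) w)" using i step[OF i(1)] unfolding lm_def by simp
    have lp: "length p = lm" using pe bnd by simp
    have pn: "p ! m = w ! (Suc (T i) + m)" if "m < lm" for m using pe that bnd by simp
    show "palindrome p" unfolding palindrome_def
    proof (rule nth_equalityI)
      show "length (rev p) = length p" by simp
      fix m assume "m < length (rev p)"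
      hence m: "m < lm" using lp by simp
      have "rev p ! m = p ! (lm - 1 - m)" using m lp by (simp add: rev_nth)
      also have "\<dots> = w ! (Suc (T i) + (lm - 1 - m))" using pn m by simp
      also have "Suc (T i) + (lm - 1 - m) = T (Suc i) - Suc m" using step[OF i(1)] m unfolding lm_def by simp
      also have "w ! (T (Suc i) - Suc m) = L w (T (Suc i) - Suc m)" using LL_nth3 bnd step[OF i(1)] m
        unfolding lm_def by simp
      also have "\<dots> = L w (Suc (T i) + m)"
      proof -
        have LE: "\<forall>m<Lm w i. L w (Suc (tau w i) + m) = L w (tau w (Suc i) - Suc m)" using C by blast
        have m': "m < Lm w i" using m unfolding lm_def .
        have "L w (Suc (tau w i) + m) = L w (tau w (Suc i) - Suc m)" using LE m' by blast
        thus ?thesis unfolding T_def by simp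
      qed
      also have "\<dots> = w ! (Suc (T i) + m)" using LL_nth3 bnd m by simp
      also have "\<dots> = p ! m" using pn m by simp
      finally show "rev p ! m = p ! m" .
    qed
  qed
  show ?thesis using part1 sf pal by blast
qed

end

theorem theorem3p1:
  fixes w :: "'a::{linorder,finite} list"
  assumes "primitive w"
  shows "((perfectly_clustering w \<and> lyndon w) \<longleftrightarrow>
            ((\<exists>x y. w = x @ y \<and> palindrome x \<and> palindrome y) \<and>
             (\<exists>ps. special_factorization w ps \<and> (\<forall>p\<in>set ps. palindrome p))))
       \<and> ((perfectly_clustering w \<and> lyndon w) \<longleftrightarrow>
            (\<exists>ps. special_factorization w ps \<and> conjugate w (bigW w ps)))"
proof -
  have ii_iii: "\<exists>ps. special_factorization w ps \<and> conjugate w (bigW w ps)"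
    if "(\<exists>x y. w = x @ y \<and> palindrome x \<and> palindrome y) \<and>
        (\<exists>ps. special_factorization w ps \<and> (\<forall>p\<in>set ps. palindrome p))"
    using that ii_imp_iii_aux by metis
  have iii_i: "perfectly_clustering w \<and> lyndon w"
    if "\<exists>ps. special_factorization w ps \<and> conjugate w (bigW w ps)"
    using that iii_imp_i[OF assms] by blast
  have i_ii: "(\<exists>x y. w = x @ y \<and> palindrome x \<and> palindrome y) \<and>
        (\<exists>ps. special_factorization w ps \<and> (\<forall>p\<in>set ps. palindrome p))"
    if "perfectly_clustering w \<and> lyndon w"
    using i_imp_ii[OF assms] that by blast
  show ?thesis using ii_iii iii_i i_ii by blast
qed


end
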